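(* Let $S\subset\mathbb{C}^4$ be the surface germ at $0$ parametrized by $\rho(a,t)=(a,t^3,t^4,at^5)$. Then the singular locus of $S$ is the line $\mathbb{C}\times\{(0,0,0)\}$, $S$ is Whitney regular along it, $S$ is defined (in coordinates $x,y,z,w$) by $y^4-z^3,\ yw-xz^2,\ zw-xy^3,\ x^3y^5-w^3,\ x^2y^2z-w^2$, and $S$ is not Cohen–Macaulay at the origin (the hyperplane section $S\cap\{x=0\}$ has an embedded component at $0$).
   Context: Whitney regularity along the singular locus $\mathcal{C}$: for all sequences $x_n\in S\setminus\mathcal{C}$, $y_n\in\mathcal{C}\setminus\{0\}$ converging to $0$ with secants $\overline{x_ny_n}\to l$ and tangent planes $T_{x_n}S\to T$, one has $T_0\mathcal{C}\subset T$ and $l\subset T$. *)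

theory Defs
  imports "HOL-Analysis.Analysis"
begin

text \<open>Points of C^4 have coordinates x = v$1, y = v$2, z = v$3, w = v$4.\<close>

definition rho :: "complex \<Rightarrow> complex \<Rightarrow> complex^4" where
  "rho a t = vector [a, t^3, t^4, a * t^5]"

definition surfS :: "(complex^4) set" where
  "surfS = {rho a t | a t. True}"

definition singline :: "(complex^4) set" where
  "singline = {vector [a, 0, 0, 0] | a. True}"


definition clinear_map :: "(complex^'m \<Rightarrow> complex^'n) \<Rightarrow> bool" where
  "clinear_map D \<longleftrightarrow> linear D \<and> (\<forall>c v. D (c *s v) = c *s D v)"

definition csubspace :: "(complex^'n) set \<Rightarrow> bool" where
  "csubspace T \<longleftrightarrow> 0 \<in> T \<and> (\<forall>u\<in>T. \<forall>v\<in>T. u + v \<in> T) \<and> (\<forall>c. \<forall>v\<in>T. c *s v \<in> T)"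

definition cline :: "complex^'n \<Rightarrow> (complex^'n) set" where
  "cline v = {c *s v | c. True}"

definition complex_chart :: "(complex^4) set \<Rightarrow> (complex^4) set \<Rightarrow> (complex^2) set \<Rightarrow>
    (complex^2 \<Rightarrow> complex^4) \<Rightarrow> bool" where
  "complex_chart S U V \<phi> \<longleftrightarrow> open U \<and> open V \<and> (\<exists>\<psi>. homeomorphism V (S \<inter> U) \<phi> \<psi>) \<and>
     (\<forall>q\<in>V. \<exists>D. (\<phi> has_derivative D) (at q) \<and> clinear_map D \<and> inj D)"

definition regular_pt :: "(complex^4) set \<Rightarrow> complex^4 \<Rightarrow> bool" where
  "regular_pt S p \<longleftrightarrow> p \<in> S \<and> (\<exists>U V \<phi>. p \<in> U \<and> complex_chart S U V \<phi>)"

definition sing_locus :: "(complex^4) set \<Rightarrow> (complex^4) set" where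
  "sing_locus S = {p \<in> S. \<not> regular_pt S p}"

definition tangent_plane :: "(complex^4) set \<Rightarrow> complex^4 \<Rightarrow> (complex^4) set \<Rightarrow> bool" where
  "tangent_plane S p T \<longleftrightarrow> (\<exists>U V \<phi> q D. p \<in> U \<and> complex_chart S U V \<phi> \<and> q \<in> V \<and>
      \<phi> q = p \<and> (\<phi> has_derivative D) (at q) \<and> T = range D)"

text \<open>Convergence of subspaces T_n to a subspace T of the same dimension (in the
  Grassmannian): every vector of T is a limit of vectors of T_n.\<close>

definition subspaces_converge :: "(nat \<Rightarrow> (complex^4) set) \<Rightarrow> (complex^4) set \<Rightarrow> bool" where
  "subspaces_converge Tn T \<longleftrightarrow>
     (\<forall>v\<in>T. \<exists>vn. (\<forall>n. vn n \<in> Tn n) \<and> vn \<longlonglongrightarrow> v)"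

definition whitney_regular_at0 :: "(complex^4) set \<Rightarrow> (complex^4) set \<Rightarrow> (complex^4) set \<Rightarrow> bool" where
  "whitney_regular_at0 S C TC \<longleftrightarrow>
    (\<forall>x y Tn T l.
       (\<forall>n. x n \<in> S - C \<and> y n \<in> C - {0} \<and> tangent_plane S (x n) (Tn n)) \<and>
       x \<longlonglongrightarrow> 0 \<and> y \<longlonglongrightarrow> 0 \<and>
       csubspace l \<and> dim l = 2 \<and> subspaces_converge (\<lambda>n. cline (x n - y n)) l \<and>
       csubspace T \<and> dim T = 4 \<and> subspaces_converge Tn T
       \<longrightarrow> TC \<subseteq> T \<and> l \<subseteq> T)"

inductive cpoly4 :: "(complex^4 \<Rightarrow> complex) \<Rightarrow> bool" where
  const: "cpoly4 (\<lambda>v. c)"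
| coord: "cpoly4 (\<lambda>v. v $ i)"
| add: "cpoly4 f \<Longrightarrow> cpoly4 g \<Longrightarrow> cpoly4 (\<lambda>v. f v + g v)"
| mult: "cpoly4 f \<Longrightarrow> cpoly4 g \<Longrightarrow> cpoly4 (\<lambda>v. f v * g v)"

definition ideal_gen :: "(complex^4 \<Rightarrow> complex) list \<Rightarrow> (complex^4 \<Rightarrow> complex) set" where
  "ideal_gen gs = {f. \<exists>c. (\<forall>i<length gs. cpoly4 (c i)) \<and>
                        f = (\<lambda>v. \<Sum>i<length gs. c i v * (gs ! i) v)}"

text \<open>Membership in the localization of the ideal at the origin.\<close>

definition loc_mem0 :: "(complex^4 \<Rightarrow> complex) list \<Rightarrow> (complex^4 \<Rightarrow> complex) \<Rightarrow> bool" where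
  "loc_mem0 gs f \<longleftrightarrow> (\<exists>u. cpoly4 u \<and> u 0 \<noteq> 0 \<and> (\<lambda>v. u v * f v) \<in> ideal_gen gs)"

definition Sgens :: "(complex^4 \<Rightarrow> complex) list" where
  "Sgens = [\<lambda>v. (v$2)^4 - (v$3)^3,
            \<lambda>v. v$2 * v$4 - v$1 * (v$3)^2,
            \<lambda>v. v$3 * v$4 - v$1 * (v$2)^3,
            \<lambda>v. (v$1)^3 * (v$2)^5 - (v$4)^3,
            \<lambda>v. (v$1)^2 * (v$2)^2 * v$3 - (v$4)^2]"

definition Jgens :: "(complex^4 \<Rightarrow> complex) list" where
  "Jgens = Sgens @ [\<lambda>v. v$1]"

end

theory Submission
  imports Defs "HOL-Complex_Analysis.Cauchy_Integral_Formula"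
begin

lemma vector_4 [simp]:
 "(vector [a,b,c,d] ::('a::zero)^4)$1 = a"
 "(vector [a,b,c,d] ::('a::zero)^4)$2 = b"
 "(vector [a,b,c,d] ::('a::zero)^4)$3 = c"
 "(vector [a,b,c,d] ::('a::zero)^4)$4 = d"
  unfolding vector_def by simp_all
lemma rho_nth[simp]: "rho a t $ 1 = a" "rho a t $ 2 = t^3" "rho a t $ 3 = t^4" "rho a t $ 4 = a*t^5"
  by (simp_all add: rho_def)

lemma vec4_eqI: "(v::'a^4)$1 = u$1 \<Longrightarrow> v$2 = u$2 \<Longrightarrow> v$3 = u$3 \<Longrightarrow> v$4 = u$4 \<Longrightarrow> v = u"
  by (simp add: vec_eq_iff forall_4)

lemma mem_surfS: "v \<in> surfS \<longleftrightarrow> (\<exists>a t. v = rho a t)"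
  by (simp add: surfS_def)

lemma Sgens_simps: "length Sgens = 5" "set Sgens = {\<lambda>v. (v$2)^4 - (v$3)^3,
            \<lambda>v. v$2 * v$4 - v$1 * (v$3)^2,
            \<lambda>v. v$3 * v$4 - v$1 * (v$2)^3,
            \<lambda>v. (v$1)^3 * (v$2)^5 - (v$4)^3,
            \<lambda>v. (v$1)^2 * (v$2)^2 * v$3 - (v$4)^2}"
  by (simp_all add: Sgens_def)

lemma zero_set_imp_rho:
  fixes v :: "complex^4"
  assumes h1: "(v$2)^4 = (v$3)^3" and h2: "v$2 * v$4 = v$1 * (v$3)^2"
    and h5: "(v$1)^2 * (v$2)^2 * v$3 = (v$4)^2"
  shows "v = rho (v$1) (if v$2 = 0 then 0 else v$3/v$2)"
proof (cases "v$2 = 0")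
  case True
  then have "v$3 = 0" using h1 by simp
  then have "v$4 = 0" using h5 True by simp
  then show ?thesis using True \<open>v$3 = 0\<close> by (intro vec4_eqI) simp_all
next
  case False
  let ?t = "v$3/v$2"
  have t3: "?t^3 = v$2" using h1 False by (simp add: power_divide field_simps eval_nat_numeral)
  have t4: "?t^4 = v$3" using h1 False by (simp add: power_divide field_simps eval_nat_numeral)
  have "v$4 = v$1 * (v$3)^2 / v$2" using h2 False by (simp add: field_simps)
  also have "\<dots> = v$1 * ?t^5" using False t3 t4
  proof -
    have e: "(v$3)^5 = (v$3)^2 * (v$2)^4" using h1 by (simp add: eval_nat_numeral)
    have "v$1 * ?t^5 = v$1 * (v$3)^2 * (v$2)^4 / (v$2)^5" by (simp add: power_divide e)
    also have "\<dots> = v$1 * (v$3)^2 / v$2" using False by (simp add: eval_nat_numeral)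
    finally show ?thesis by simp
  qed
  finally show ?thesis using False t3 t4 by (intro vec4_eqI) simp_all
qed

lemma gens_vanish_rho: "\<forall>g\<in>set Sgens. g (rho a t) = 0"
  unfolding Sgens_simps(2) by (simp add: algebra_simps power_mult_distrib flip: power_add power_mult)

lemma surfS_zero_set: "surfS = {v. \<forall>g\<in>set Sgens. g v = 0}"
proof
  show "surfS \<subseteq> {v. \<forall>g\<in>set Sgens. g v = 0}"
    using gens_vanish_rho by (auto simp: mem_surfS)
  show "{v. \<forall>g\<in>set Sgens. g v = 0} \<subseteq> surfS"
  proof
    fix v :: "complex^4" assume "v \<in> {v. \<forall>g\<in>set Sgens. g v = 0}"
    then have "(v$2)^4 = (v$3)^3" "v$2 * v$4 = v$1 * (v$3)^2" "(v$1)^2 * (v$2)^2 * v$3 = (v$4)^2"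
      by (auto simp: Sgens_simps)
    from zero_set_imp_rho[OF this] show "v \<in> surfS" unfolding mem_surfS by blast
  qed
qed

lemma S_rel1: "v \<in> surfS \<Longrightarrow> (v$3)^3 = (v$2)^4"
  by (auto simp: mem_surfS simp flip: power_mult)
lemma S_rel2: "v \<in> surfS \<Longrightarrow> v$2 = 0 \<Longrightarrow> v$3 = 0 \<and> v$4 = 0"
  by (auto simp: mem_surfS)
lemma S_rel3: "v \<in> surfS \<Longrightarrow> v$2 \<noteq> 0 \<Longrightarrow> v$4 = v$1 * (v$3/v$2)^5"
proof -
  assume "v \<in> surfS" "v$2 \<noteq> 0"
  then obtain a t where v: "v = rho a t" "t \<noteq> 0" by (auto simp: mem_surfS)
  have eq: "t^4 / t^3 = t" using v(2) by (simp add: eval_nat_numeral)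
  show ?thesis using v eq by simp
qed

lemma S_islimpt: "(0::complex^4) islimpt (surfS \<inter> {v. v$1 = 0})"
proof (rule islimptI)
  fix T :: "(complex^4) set" assume T: "0 \<in> T" "open T"
  have r: "rho a t = (\<chi> i. if i = 1 then a else if i = 2 then t^3 else if i = 3 then t^4 else a*t^5)" for a t
    by (rule vec4_eqI) simp_all
  have c: "continuous_on UNIV (\<lambda>t::complex. rho 0 t)"
    unfolding r
    apply (intro continuous_on_vec_lambda)
    subgoal for i using exhaust_4[of i] by (auto intro!: continuous_intros)
    done
  have "((\<lambda>t::complex. rho 0 t) \<longlongrightarrow> rho 0 0) (at 0)"
    using c by (simp add: continuous_on_def)
  moreover have "rho 0 0 = 0" by (intro vec4_eqI) simp_all
  ultimately have "(\<lambda>t::complex. rho 0 t) \<midarrow>0\<rightarrow> 0" by simp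
  then have "\<forall>\<^sub>F t in at (0::complex). rho 0 t \<in> T"
    using T by (intro topological_tendstoD) auto
  then obtain d where d: "d > 0" "\<And>t::complex. t \<noteq> 0 \<and> dist t 0 < d \<Longrightarrow> rho 0 t \<in> T"
    unfolding eventually_at by auto
  define t :: complex where "t = of_real (d/2)"
  have t: "t \<noteq> 0" "rho 0 t \<in> T" using d by (auto simp: t_def intro!: d(2))
  show "\<exists>y\<in>surfS \<inter> {v. v $ 1 = 0}. y \<in> T \<and> y \<noteq> 0"
  proof (intro bexI conjI)
    show "rho 0 t \<noteq> 0"
    proof
      assume "rho 0 t = 0"
      then have "(rho 0 t)$2 = 0" by simp
      then show False using t by simp
    qed
  qed (use t in \<open>auto simp: mem_surfS\<close>)
qed

lemma norm_axis_eq: "norm (axis i x :: 'b::real_normed_vector^'n) = norm x"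
proof -
  have "(\<Sum>j\<in>UNIV. (norm (axis i x $ j))^2) = (\<Sum>j\<in>UNIV. if j = i then (norm x)^2 else 0)"
    by (rule sum.cong) (auto simp: axis_def)
  also have "\<dots> = (norm x)^2" by simp
  finally show ?thesis unfolding norm_vec_def L2_set_def by simp
qed

lemma bounded_linear_axis: "bounded_linear (axis i :: 'b::real_normed_vector \<Rightarrow> 'b^'n)"
  by (rule bounded_linear_intro[where K=1]) (simp_all add: axis_def vec_eq_iff norm_axis_eq[unfolded axis_def])

lemma sum_axis_vec: "(\<Sum>i\<in>UNIV. axis i (x $ i)) = (x :: 'b::real_normed_vector^'n)"
  by (simp add: vec_eq_iff axis_def sum_component if_distrib sum.delta cong: if_cong)

lemma has_derivative_vecI:
  fixes f :: "'a::real_normed_vector \<Rightarrow> 'b::real_normed_vector^'n"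
  assumes "\<And>i. ((\<lambda>x. f x $ i) has_derivative (\<lambda>h. f' h $ i)) F"
  shows "(f has_derivative f') F"
proof -
  have "((\<lambda>x. \<Sum>i\<in>UNIV. axis i (f x $ i)) has_derivative (\<lambda>h. \<Sum>i\<in>UNIV. axis i (f' h $ i))) F"
    by (intro has_derivative_sum bounded_linear.has_derivative[OF bounded_linear_axis] assms)
  then show ?thesis by (simp add: sum_axis_vec)
qed

lemma has_derivative_vec_nth':
  "(f has_derivative f') F \<Longrightarrow> ((\<lambda>x. f x $ i) has_derivative (\<lambda>h. f' h $ i)) F"
  by (rule bounded_linear.has_derivative[OF bounded_linear_vec_nth])

lemma nz_near0:
  fixes c :: "complex \<Rightarrow> complex"
  assumes "(c has_field_derivative C) (at 0)" "C \<noteq> 0" "c 0 = 0"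
  shows "\<exists>r>0. \<forall>l. l \<noteq> 0 \<and> norm l < r \<longrightarrow> c l \<noteq> 0"
proof -
  have "((\<lambda>l. (c l - c 0) / (l - 0)) \<longlongrightarrow> C) (at 0)"
    using assms(1) by (simp add: has_field_derivative_iff)
  then have "eventually (\<lambda>l. (c l - c 0) / (l - 0) \<noteq> 0) (at 0)"
    using assms(2) by (rule tendsto_imp_eventually_ne)
  then obtain d where d: "d > 0" "\<And>l. l \<noteq> 0 \<and> dist l 0 < d \<Longrightarrow> (c l - c 0) / (l - 0) \<noteq> 0"
    unfolding eventually_at by auto
  show ?thesis
    by (rule exI[of _ d]) (use d assms(3) in auto)
qed

lemma key_1d_K1:
  fixes y z w x :: "complex \<Rightarrow> complex"
  assumes r: "0 < r"
  and hol: "y holomorphic_on ball 0 r" "z holomorphic_on ball 0 r" "x holomorphic_on ball 0 r"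
  and y0: "y 0 = 0" "z 0 = 0" "w 0 = 0"
  and rel1: "\<And>l. l \<in> ball 0 r \<Longrightarrow> z l ^3 = y l ^4"
  and rel3: "\<And>l. l \<in> ball 0 r \<Longrightarrow> y l \<noteq> 0 \<Longrightarrow> w l = x l * (z l / y l)^5"
  and nz: "\<And>l. l \<in> ball 0 r \<Longrightarrow> l \<noteq> 0 \<Longrightarrow> y l \<noteq> 0"
  shows "(y has_field_derivative 0) (at 0) \<and> (z has_field_derivative 0) (at 0) \<and> (w has_field_derivative 0) (at 0)"
proof -
  define h where "h l = (if l = 0 then 0 else z l / y l)" for l
  have "(\<lambda>l. z l / y l) holomorphic_on (ball 0 r - {0})"
  proof (rule holomorphic_on_divide)
    show "z holomorphic_on ball 0 r - {0}" using hol(2) by (rule holomorphic_on_subset) blast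
    show "y holomorphic_on ball 0 r - {0}" using hol(1) by (rule holomorphic_on_subset) blast
  qed (use nz in blast)
  then have hol_h': "h holomorphic_on (ball 0 r - {0})"
    by (rule holomorphic_transform) (simp add: h_def)
  have h3: "h l ^ 3 = y l" if "l \<in> ball 0 r" for l
  proof (cases "l = 0")
    case True then show ?thesis by (simp add: h_def y0)
  next
    case False
    then have "y l \<noteq> 0" using nz that by auto
    then show ?thesis using False rel1[OF that] by (simp add: h_def power_divide eval_nat_numeral)
  qed
  have h4: "h l ^ 4 = z l" if "l \<in> ball 0 r" for l
  proof (cases "l = 0")
    case True then show ?thesis by (simp add: h_def y0)
  next
    case False
    then have "y l \<noteq> 0" using nz that by auto
    have "h l ^ 4 = h l * h l ^ 3" by (simp add: eval_nat_numeral)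
    also have "\<dots> = z l" using h3[OF that] False \<open>y l \<noteq> 0\<close> by (simp add: h_def)
    finally show ?thesis .
  qed
  have h5: "x l * h l ^ 5 = w l" if "l \<in> ball 0 r" for l
  proof (cases "l = 0")
    case True then show ?thesis by (simp add: h_def y0)
  next
    case False
    then have "y l \<noteq> 0" using nz that by auto
    then show ?thesis using rel3[OF that] False by (simp add: h_def)
  qed
  have nh: "norm (h l) = root 3 (norm (y l))" if "l \<in> ball 0 r" for l
  proof -
    have "norm (y l) = norm (h l) ^ 3" using h3[OF that] by (metis norm_power)
    then show ?thesis by (simp add: real_root_power_cancel)
  qed
  have ycont: "(y \<longlongrightarrow> y 0) (at 0)"
  proof -
    have "continuous_on (ball 0 r) y" by (rule holomorphic_on_imp_continuous_on[OF hol(1)])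
    then have "isCont y 0" using r by (simp add: continuous_on_eq_continuous_at)
    then show ?thesis by (simp add: isCont_def)
  qed
  have "((\<lambda>l. root 3 (norm (y l))) \<longlongrightarrow> root 3 (norm (y 0))) (at 0)"
    by (intro tendsto_real_root tendsto_norm ycont)
  then have "((\<lambda>l. root 3 (norm (y l))) \<longlongrightarrow> 0) (at 0)" by (simp add: y0)
  moreover have "eventually (\<lambda>l. root 3 (norm (y l)) = norm (h l)) (at 0)"
    unfolding eventually_at using r nh by (intro exI[of _ r]) (auto simp: dist_norm)
  ultimately have "((\<lambda>l. norm (h l)) \<longlongrightarrow> 0) (at 0)"
    by (simp add: tendsto_cong)
  then have "(h \<longlongrightarrow> 0) (at 0)" by (rule tendsto_norm_zero_cancel)
  then have hlim: "(h \<longlongrightarrow> h 0) (at 0 within ball 0 r)"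
    by (simp add: h_def) (rule tendsto_mono[OF at_le[of "ball 0 r" UNIV]], simp_all)
  have hol_h: "h holomorphic_on ball 0 r"
    by (rule no_isolated_singularity'[of "{0}"]) (use hlim hol_h' in auto)
  have dh: "(h has_field_derivative deriv h 0) (at 0)"
    using hol_h r by (intro holomorphic_derivI) auto
  have dx: "(x has_field_derivative deriv x 0) (at 0)"
    using hol r by (intro holomorphic_derivI) auto
  have h0: "h 0 = 0" by (simp add: h_def)
  have d3: "((\<lambda>l. h l ^ 3) has_field_derivative 0) (at 0)"
    using DERIV_power[OF dh, of 3] by (simp add: h0)
  have d4: "((\<lambda>l. h l ^ 4) has_field_derivative 0) (at 0)"
    using DERIV_power[OF dh, of 4] by (simp add: h0)
  have d5: "((\<lambda>l. x l * h l ^ 5) has_field_derivative 0) (at 0)"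
    using DERIV_mult[OF dx DERIV_power[OF dh, of 5]] by (simp add: h0)
  have c0: "0 \<in> ball (0::complex) r" using r by simp
  show ?thesis
    using has_field_derivative_transform_within_open[OF d3 open_ball c0 h3]
      has_field_derivative_transform_within_open[OF d4 open_ball c0 h4]
      has_field_derivative_transform_within_open[OF d5 open_ball c0 h5]
    by blast
qed

lemma key_1d:
  fixes y z w x :: "complex \<Rightarrow> complex"
  assumes r: "0 < r"
  and hol: "y holomorphic_on ball 0 r" "z holomorphic_on ball 0 r" "x holomorphic_on ball 0 r"
  and y0: "y 0 = 0"
  and rel1: "\<And>l. l \<in> ball 0 r \<Longrightarrow> z l ^3 = y l ^4"
  and rel2: "\<And>l. l \<in> ball 0 r \<Longrightarrow> y l = 0 \<Longrightarrow> z l = 0 \<and> w l = 0"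
  and rel3: "\<And>l. l \<in> ball 0 r \<Longrightarrow> y l \<noteq> 0 \<Longrightarrow> w l = x l * (z l / y l)^5"
  and dY: "(y has_field_derivative Y) (at 0)"
  and dZ: "(z has_field_derivative Z) (at 0)"
  and dW: "(w has_field_derivative W) (at 0)"
  shows "Y = 0 \<and> Z = 0 \<and> W = 0"
proof -
  have c0: "(0::complex) \<in> ball 0 r" using r by simp
  have z0: "z 0 = 0" and w0: "w 0 = 0" using rel2[OF c0 y0] by auto
  have claim: "Y = 0 \<and> Z = 0 \<and> W = 0"
    if rp: "r' > 0" and nzy: "\<And>l. l \<noteq> 0 \<Longrightarrow> norm l < r' \<Longrightarrow> l \<in> ball 0 r \<Longrightarrow> y l \<noteq> 0" for r'
  proof -
    define s where "s = min r r'"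
    have s: "s > 0" "ball 0 s \<subseteq> ball 0 r" using r rp by (auto simp: s_def)
    have nz': "y l \<noteq> 0" if "l \<in> ball 0 s" "l \<noteq> 0" for l
    proof -
      have "norm l < r'" "l \<in> ball 0 r" using that by (auto simp: s_def)
      then show ?thesis using nzy \<open>l \<noteq> 0\<close> by blast
    qed
    have K: "(y has_field_derivative 0) (at 0) \<and> (z has_field_derivative 0) (at 0) \<and> (w has_field_derivative 0) (at 0)"
    proof (rule key_1d_K1[where y=y and z=z and w=w and x=x and r=s])
      show "0 < s" by (rule s(1))
      show "y holomorphic_on ball 0 s" by (rule holomorphic_on_subset[OF hol(1) s(2)])
      show "z holomorphic_on ball 0 s" by (rule holomorphic_on_subset[OF hol(2) s(2)])
      show "x holomorphic_on ball 0 s" by (rule holomorphic_on_subset[OF hol(3) s(2)])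
      show "y 0 = 0" "z 0 = 0" "w 0 = 0" by (fact y0, fact z0, fact w0)
      show "z l ^ 3 = y l ^ 4" if "l \<in> ball 0 s" for l using rel1 s(2) that by (meson subsetD)
      show "w l = x l * (z l / y l) ^ 5" if "l \<in> ball 0 s" "y l \<noteq> 0" for l
        using rel3 s(2) that by (meson subsetD)
      show "y l \<noteq> 0" if "l \<in> ball 0 s" "l \<noteq> 0" for l by (rule nz'[OF that])
    qed
    have "Y = 0" using DERIV_unique[OF dY] K by blast
    moreover have "Z = 0" using DERIV_unique[OF dZ] K by blast
    moreover have "W = 0" using DERIV_unique[OF dW] K by blast
    ultimately show ?thesis by blast
  qed
  show ?thesis
  proof (cases "Y = 0 \<and> Z = 0 \<and> W = 0")
    case False
    then consider "Y \<noteq> 0" | "Z \<noteq> 0" | "W \<noteq> 0" by blast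
    then show ?thesis
    proof cases
      case 1
      from nz_near0[OF dY 1 y0] obtain r' where r': "r' > 0" "\<forall>l. l \<noteq> 0 \<and> norm l < r' \<longrightarrow> y l \<noteq> 0" by blast
      show ?thesis by (rule claim[OF r'(1)]) (use r'(2) in blast)
    next
      case 2
      from nz_near0[OF dZ 2 z0] obtain r' where r': "r' > 0" "\<forall>l. l \<noteq> 0 \<and> norm l < r' \<longrightarrow> z l \<noteq> 0" by blast
      show ?thesis
      proof (rule claim[OF r'(1)])
        fix l :: complex assume "l \<noteq> 0" "norm l < r'" "l \<in> ball 0 r"
        then show "y l \<noteq> 0" using r'(2) rel2 by blast
      qed
    next
      case 3
      from nz_near0[OF dW 3 w0] obtain r' where r': "r' > 0" "\<forall>l. l \<noteq> 0 \<and> norm l < r' \<longrightarrow> w l \<noteq> 0" by blast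
      show ?thesis
      proof (rule claim[OF r'(1)])
        fix l :: complex assume "l \<noteq> 0" "norm l < r'" "l \<in> ball 0 r"
        then show "y l \<noteq> 0" using r'(2) rel2 by blast
      qed
    qed
  qed
qed

lemma line_deriv:
  fixes \<phi> :: "complex^2 \<Rightarrow> complex^4"
  assumes "(\<phi> has_derivative D') (at (q + l0 *s d))" "clinear_map D'"
  shows "((\<lambda>l. \<phi> (q + l *s d) $ k) has_field_derivative (D' d $ k)) (at l0)"
proof -
  have L: "((\<lambda>l::complex. q + l *s d) has_derivative (\<lambda>m. m *s d)) (at l0)"
  proof (rule has_derivative_vecI)
    fix i
    have "((\<lambda>l. q $ i + l * d $ i) has_derivative (\<lambda>h. h * d $ i)) (at l0)"
      by (auto intro!: derivative_eq_intros)
    then show "((\<lambda>l. (q + l *s d) $ i) has_derivative (\<lambda>h. (h *s d) $ i)) (at l0)"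
      by simp
  qed
  have "((\<phi> \<circ> (\<lambda>l. q + l *s d)) has_derivative (D' \<circ> (\<lambda>m. m *s d))) (at l0)"
    by (rule diff_chain_at[OF L assms(1)])
  then have "((\<lambda>l. \<phi> (q + l *s d) $ k) has_derivative (\<lambda>h. (D' (h *s d)) $ k)) (at l0)"
    using has_derivative_vec_nth'[of "\<phi> \<circ> (\<lambda>l. q + l *s d)"] by (simp add: o_def)
  moreover have "(\<lambda>h. (D' (h *s d)) $ k) = (*) (D' d $ k)"
    using assms(2) by (auto simp: clinear_map_def mult.commute)
  ultimately show ?thesis by (simp add: has_field_derivative_def)
qed

lemma chart_facts:
  assumes "complex_chart S U V \<phi>"
  shows "open V" "\<And>p. p \<in> V \<Longrightarrow> \<phi> p \<in> S"
    "\<And>p. p \<in> V \<Longrightarrow> \<exists>D. (\<phi> has_derivative D) (at p) \<and> clinear_map D \<and> inj D"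
  using assms unfolding complex_chart_def homeomorphism_def by blast+

lemma sing_dir:
  fixes \<phi> :: "complex^2 \<Rightarrow> complex^4"
  assumes ch: "complex_chart surfS U V \<phi>" and q: "q \<in> V" and y0: "(\<phi> q)$2 = 0"
    and dq: "(\<phi> has_derivative D) (at q)" and cD: "clinear_map D"
  shows "D d $ 2 = 0 \<and> D d $ 3 = 0 \<and> D d $ 4 = 0"
proof -
  note cf = chart_facts[OF ch]
  have L: "((\<lambda>l::complex. q + l *s d) has_derivative (\<lambda>m. m *s d)) (at l0)" for l0
  proof (rule has_derivative_vecI)
    fix i
    have "((\<lambda>l. q $ i + l * d $ i) has_derivative (\<lambda>h. h * d $ i)) (at l0)"
      by (auto intro!: derivative_eq_intros)
    then show "((\<lambda>l. (q + l *s d) $ i) has_derivative (\<lambda>h. (h *s d) $ i)) (at l0)"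
      by simp
  qed
  have "open ((\<lambda>l::complex. q + l *s d) -` V)"
    by (rule continuous_open_vimage[OF cf(1)], rule has_derivative_continuous[OF L])
  moreover have "0 \<in> (\<lambda>l::complex. q + l *s d) -` V" using q by simp
  ultimately obtain r where r: "r > 0" "ball 0 r \<subseteq> (\<lambda>l::complex. q + l *s d) -` V"
    by (meson open_contains_ball)
  have inV: "q + l *s d \<in> V" if "l \<in> ball 0 r" for l using r that by blast
  have hol: "(\<lambda>l. \<phi> (q + l *s d) $ k) holomorphic_on ball 0 r" for k
  proof (subst holomorphic_on_open[OF open_ball], intro ballI)
    fix l assume "l \<in> ball (0::complex) r"
    then obtain D' where "(\<phi> has_derivative D') (at (q + l *s d))" "clinear_map D'"
      using cf(3)[OF inV] by blast
    from line_deriv[OF this] show "\<exists>f'. ((\<lambda>l. \<phi> (q + l *s d) $ k) has_field_derivative f') (at l)" by blast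
  qed
  have inS: "\<phi> (q + l *s d) \<in> surfS" if "l \<in> ball 0 r" for l using cf(2)[OF inV[OF that]] .
  have q0: "q + (0::complex) *s d = q" by (simp add: vec_eq_iff)
  have dq': "(\<phi> has_derivative D) (at (q + 0 *s d))" using dq q0 by simp
  show ?thesis
  proof (rule key_1d[where y="\<lambda>l. \<phi> (q + l *s d) $ 2" and z="\<lambda>l. \<phi> (q + l *s d) $ 3"
        and w="\<lambda>l. \<phi> (q + l *s d) $ 4" and x="\<lambda>l. \<phi> (q + l *s d) $ 1", OF r(1) hol hol hol])
    show "\<phi> (q + 0 *s d) $ 2 = 0" using y0 q0 by simp
    show "(\<phi> (q + l *s d) $ 3) ^ 3 = (\<phi> (q + l *s d) $ 2) ^ 4" if "l \<in> ball 0 r" for l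
      using S_rel1[OF inS[OF that]] .
    show "\<phi> (q + l *s d) $ 3 = 0 \<and> \<phi> (q + l *s d) $ 4 = 0" if "l \<in> ball 0 r" "\<phi> (q + l *s d) $ 2 = 0" for l
      using S_rel2[OF inS[OF that(1)] that(2)] .
    show "\<phi> (q + l *s d) $ 4 = \<phi> (q + l *s d) $ 1 * (\<phi> (q + l *s d) $ 3 / \<phi> (q + l *s d) $ 2) ^ 5"
      if "l \<in> ball 0 r" "\<phi> (q + l *s d) $ 2 \<noteq> 0" for l
      using S_rel3[OF inS[OF that(1)] that(2)] .
    show "((\<lambda>l. \<phi> (q + l *s d) $ 2) has_field_derivative D d $ 2) (at 0)" by (rule line_deriv[OF dq' cD])
    show "((\<lambda>l. \<phi> (q + l *s d) $ 3) has_field_derivative D d $ 3) (at 0)" by (rule line_deriv[OF dq' cD])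
    show "((\<lambda>l. \<phi> (q + l *s d) $ 4) has_field_derivative D d $ 4) (at 0)" by (rule line_deriv[OF dq' cD])
  qed
qed

lemma sing_not_regular:
  assumes ch: "complex_chart surfS U V \<phi>" and q: "q \<in> V" and y0: "(\<phi> q)$2 = 0"
  shows False
proof -
  obtain D where dq: "(\<phi> has_derivative D) (at q)" and cD: "clinear_map D" and iD: "inj D"
    using chart_facts(3)[OF ch q] by blast
  note sd = sing_dir[OF ch q y0 dq cD]
  have lin: "linear D" using cD by (simp add: clinear_map_def)
  have sc: "D (c *s v) = c *s D v" for c v using cD by (simp add: clinear_map_def)
  define d1 :: "complex^2" where "d1 = axis 1 1"
  define d2 :: "complex^2" where "d2 = axis 2 1"
  define \<alpha> where "\<alpha> = D d1 $ 1"
  define \<beta> where "\<beta> = D d2 $ 1"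
  define u where "u = \<beta> *s d1 - \<alpha> *s d2"
  have "D u = \<beta> *s D d1 - \<alpha> *s D d2" unfolding u_def by (simp add: linear_diff[OF lin] sc)
  also have "\<dots> = 0" using sd[of d1] sd[of d2] by (intro vec4_eqI) (simp_all add: \<alpha>_def \<beta>_def)
  finally have "D u = D 0" using linear_0[OF lin] by simp
  then have "u = 0" using iD by (simp add: inj_eq)
  then have "u $ 2 = 0" by simp
  then have a0: "\<alpha> = 0" by (simp add: u_def d1_def d2_def axis_def)
  have "D d1 = 0" using sd[of d1] a0 by (intro vec4_eqI) (simp_all add: \<alpha>_def)
  then have "D d1 = D 0" using linear_0[OF lin] by simp
  then have "d1 = 0" using iD by (simp add: inj_eq)
  then show False by (simp add: d1_def)
qed

lemma has_derivative_nth_id[derivative_intros]: "((\<lambda>x::'a::real_normed_vector^'n. x $ i) has_derivative (\<lambda>h. h $ i)) F"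
  by (rule bounded_linear_imp_has_derivative[OF bounded_linear_vec_nth])

lemma rho_chi: "rho a t = (\<chi> i. if i = 1 then a else if i = 2 then t^3 else if i = 3 then t^4 else a*t^5)"
  by (rule vec4_eqI) simp_all

definition phiR :: "complex^2 \<Rightarrow> complex^4" where "phiR q = rho (q$1) (q$2)"
definition psiR :: "complex^4 \<Rightarrow> complex^2" where "psiR v = vector [v$1, v$3/v$2]"
definition DR :: "complex^2 \<Rightarrow> complex^2 \<Rightarrow> complex^4" where
  "DR q h = vector [h$1, 3*(q$2)^2*h$2, 4*(q$2)^3*h$2, h$1*(q$2)^5 + 5*(q$1)*(q$2)^4*h$2]"

lemma vec2_eqI: "(v::'a^2)$1 = u$1 \<Longrightarrow> v$2 = u$2 \<Longrightarrow> v = u"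
  by (simp add: vec_eq_iff forall_2)

lemma phiR_deriv: "(phiR has_derivative DR q) (at q)"
proof (rule has_derivative_vecI)
  fix i :: 4
  consider "i = 1" | "i = 2" | "i = 3" | "i = 4" using exhaust_4 by blast
  then show "((\<lambda>x. phiR x $ i) has_derivative (\<lambda>h. DR q h $ i)) (at q)"
  proof cases
    case 1 then show ?thesis by (simp add: phiR_def DR_def has_derivative_nth_id)
  next
    case 2 then show ?thesis unfolding phiR_def DR_def
      by (auto intro!: derivative_eq_intros simp: algebra_simps)
  next
    case 3 then show ?thesis unfolding phiR_def DR_def
      by (auto intro!: derivative_eq_intros simp: algebra_simps)
  next
    case 4 then show ?thesis unfolding phiR_def DR_def
      by (auto intro!: derivative_eq_intros simp: algebra_simps)
  qed
qed

lemma DR_clinear: "clinear_map (DR q)"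
proof -
  have sc: "DR q (c *s v) = c *s DR q v" for c v
    by (rule vec4_eqI) (simp_all add: DR_def algebra_simps)
  have "linear (DR q)"
  proof (rule linearI)
    show "DR q (x + y) = DR q x + DR q y" for x y
      by (rule vec4_eqI) (simp_all add: DR_def algebra_simps)
    show "DR q (c *\<^sub>R x) = c *\<^sub>R DR q x" for c x
      by (rule vec4_eqI) (simp_all add: DR_def vector_scaleR_component, simp_all add: scaleR_conv_of_real algebra_simps)
  qed
  then show ?thesis using sc by (simp add: clinear_map_def)
qed

lemma DR_inj: "q$2 \<noteq> 0 \<Longrightarrow> inj (DR q)"
proof (rule injI)
  fix x y assume q: "q$2 \<noteq> 0" and e: "DR q x = DR q y"
  have 1: "x$1 = y$1" using arg_cong[OF e, of "\<lambda>v. v$1"] by (simp add: DR_def)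
  have "3*(q$2)^2*x$2 = 3*(q$2)^2*y$2" using arg_cong[OF e, of "\<lambda>v. v$2"] by (simp add: DR_def)
  then have 2: "x$2 = y$2" using q by simp
  show "x = y" using 1 2 by (rule vec2_eqI)
qed

lemma regular_chart: "complex_chart surfS {v. v$2 \<noteq> 0} {q. q$2 \<noteq> 0} phiR"
  unfolding complex_chart_def
proof (intro conjI)
  have e4: "(\<lambda>x::complex^4. x$2) -` (-{0}) = {v. v$2 \<noteq> 0}" by auto
  show "open {v::complex^4. v$2 \<noteq> 0}"
    unfolding e4[symmetric] by (rule open_vimage_vec_nth) (simp add: open_Compl)
  have e2: "(\<lambda>x::complex^2. x$2) -` (-{0}) = {v. v$2 \<noteq> 0}" by auto
  show oV: "open {q::complex^2. q$2 \<noteq> 0}"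
    unfolding e2[symmetric] by (rule open_vimage_vec_nth) (simp add: open_Compl)
  show "\<forall>q\<in>{q. q $ 2 \<noteq> 0}. \<exists>D. (phiR has_derivative D) (at q) \<and> clinear_map D \<and> inj D"
    using phiR_deriv DR_clinear DR_inj by blast
  show "\<exists>\<psi>. homeomorphism {q::complex^2. q $ 2 \<noteq> 0} (surfS \<inter> {v. v $ 2 \<noteq> 0}) phiR \<psi>"
  proof (intro exI[of _ psiR] homeomorphismI)
    have t43: "t^4 / t^3 = t" if "t \<noteq> 0" for t :: complex using that by (simp add: eval_nat_numeral)
    show "continuous_on {q::complex^2. q $ 2 \<noteq> 0} phiR"
      unfolding phiR_def rho_chi
      apply (intro continuous_on_vec_lambda)
      subgoal for i using exhaust_4[of i] by (auto intro!: continuous_intros)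
      done
    have pc: "psiR v = (\<chi> i. if i = 1 then v$1 else v$3/v$2)" for v
      by (rule vec2_eqI) (simp_all add: psiR_def)
    show "continuous_on (surfS \<inter> {v. v $ 2 \<noteq> 0}) psiR"
      unfolding pc
      apply (intro continuous_on_vec_lambda)
      subgoal for i using exhaust_2[of i] by (auto intro!: continuous_intros)
      done
    show "phiR ` {q. q $ 2 \<noteq> 0} \<subseteq> surfS \<inter> {v. v $ 2 \<noteq> 0}"
      by (auto simp: phiR_def mem_surfS intro!: exI)
    show "psiR ` (surfS \<inter> {v. v $ 2 \<noteq> 0}) \<subseteq> {q. q $ 2 \<noteq> 0}"
      by (auto simp: psiR_def mem_surfS)
    show "psiR (phiR q) = q" if "q \<in> {q. q $ 2 \<noteq> 0}" for q
      using that t43 by (intro vec2_eqI) (simp_all add: psiR_def phiR_def)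
    show "phiR (psiR v) = v" if vS: "v \<in> surfS \<inter> {v. v $ 2 \<noteq> 0}" for v
    proof -
      obtain a t where v: "v = rho a t" using vS by (auto simp: mem_surfS)
      then have "t \<noteq> 0" using vS by auto
      then show ?thesis using v t43 by (simp add: psiR_def phiR_def)
    qed
  qed
qed

lemma rho_singline: "rho a 0 \<in> singline" "rho a t \<in> singline \<Longrightarrow> t = 0"
proof -
  show "rho a 0 \<in> singline" unfolding singline_def
    by (auto intro!: exI[of _ a] vec4_eqI)
  show "t = 0" if "rho a t \<in> singline"
  proof -
    from that obtain b where "rho a t = vector [b,0,0,0]" by (auto simp: singline_def)
    then have "(rho a t)$2 = 0" by simp
    then show ?thesis by simp
  qed
qed

lemma singline_sub: "singline \<subseteq> surfS"
proof
  fix v assume "v \<in> singline"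
  then obtain b where "v = vector [b,0,0,0]" by (auto simp: singline_def)
  then have "v = rho b 0" by (intro vec4_eqI) simp_all
  then show "v \<in> surfS" by (auto simp: mem_surfS)
qed

lemma singline_y: "v \<in> singline \<Longrightarrow> v$2 = 0"
  by (auto simp: singline_def)

lemma S_not_singline: "v \<in> surfS \<Longrightarrow> v \<notin> singline \<Longrightarrow> v$2 \<noteq> 0"
  using rho_singline by (auto simp: mem_surfS)

lemma chart_image: "complex_chart S U V \<phi> \<Longrightarrow> \<phi> ` V = S \<inter> U"
  unfolding complex_chart_def using homeomorphism_image1 by metis

lemma sing_locus_eq: "sing_locus surfS = singline"
proof
  show "sing_locus surfS \<subseteq> singline"
  proof
    fix p assume p: "p \<in> sing_locus surfS"
    then have pS: "p \<in> surfS" and nr: "\<not> regular_pt surfS p" by (auto simp: sing_locus_def)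
    show "p \<in> singline"
    proof (rule ccontr)
      assume "p \<notin> singline"
      then have "p$2 \<noteq> 0" using S_not_singline pS by blast
      then have "p \<in> {v. v$2 \<noteq> 0}" by simp
      then have "regular_pt surfS p" unfolding regular_pt_def
        using pS regular_chart by (intro conjI exI) 
      then show False using nr by blast
    qed
  qed
  show "singline \<subseteq> sing_locus surfS"
  proof
    fix p assume p: "p \<in> singline"
    have pS: "p \<in> surfS" using p singline_sub by blast
    have "\<not> regular_pt surfS p"
    proof
      assume "regular_pt surfS p"
      then obtain U V \<phi> where pU: "p \<in> U" and ch: "complex_chart surfS U V \<phi>"
        unfolding regular_pt_def by blast
      then have "p \<in> \<phi> ` V" using chart_image[OF ch] pS by blast
      then obtain q where q: "q \<in> V" "\<phi> q = p" by blast
      show False by (rule sing_not_regular[OF ch q(1)]) (use q singline_y[OF p] in simp)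
    qed
    then show "p \<in> sing_locus surfS" using pS by (simp add: sing_locus_def)
  qed
qed

lemma S_rel4: "v \<in> surfS \<Longrightarrow> v$2 * v$4 - v$1 * (v$3)^2 = 0"
  using surfS_zero_set by (auto simp: Sgens_simps)

lemma tangent_constraint:
  assumes tp: "tangent_plane surfS p T" and u: "u \<in> T"
  shows "4*(p$2)^3*u$2 - 3*(p$3)^2*u$3 = 0 \<and> u$2*p$4 + p$2*u$4 - (u$1*(p$3)^2 + p$1*(2*p$3*u$3)) = 0"
proof -
  obtain U V \<phi> q D where ch: "complex_chart surfS U V \<phi>" and q: "q \<in> V" "\<phi> q = p"
    and dq: "(\<phi> has_derivative D) (at q)" and T: "T = range D"
    using tp unfolding tangent_plane_def by blast
  note cf = chart_facts[OF ch]
  obtain h where u: "u = D h" using u T by blast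
  have c: "((\<lambda>x. f x) has_derivative (\<lambda>h. 0)) (at q)" if "\<And>x. x \<in> V \<Longrightarrow> f x = 0" for f :: "complex^2 \<Rightarrow> complex"
    by (rule has_derivative_transform_within_open[OF has_derivative_const cf(1) q(1)]) (use that in simp)
  have d1: "((\<lambda>x. (\<phi> x$2)^4 - (\<phi> x$3)^3) has_derivative
      (\<lambda>h. of_nat 4 * D h $2 * (\<phi> q $2)^(4-1) - of_nat 3 * D h $3 * (\<phi> q $3)^(3-1))) (at q)"
    by (intro has_derivative_diff has_derivative_power has_derivative_vec_nth'[OF dq])
  have z1: "((\<lambda>x. (\<phi> x$2)^4 - (\<phi> x$3)^3) has_derivative (\<lambda>h. 0)) (at q)"
    by (rule c) (use S_rel1 cf(2) in simp)
  have e1: "of_nat 4 * D h $2 * (\<phi> q $2)^(4-1) - of_nat 3 * D h $3 * (\<phi> q $3)^(3-1) = 0"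
    using fun_cong[OF has_derivative_unique[OF d1 z1], of h] by simp
  have d2: "((\<lambda>x. \<phi> x$2 * \<phi> x$4 - \<phi> x$1 * (\<phi> x$3)^2) has_derivative
      (\<lambda>h. (\<phi> q$2 * D h$4 + D h$2 * \<phi> q$4) - (\<phi> q$1 * (of_nat 2 * D h $3 * (\<phi> q $3)^(2-1)) + D h$1 * (\<phi> q$3)^2))) (at q)"
    by (intro has_derivative_diff has_derivative_mult has_derivative_power has_derivative_vec_nth'[OF dq])
  have z2: "((\<lambda>x. \<phi> x$2 * \<phi> x$4 - \<phi> x$1 * (\<phi> x$3)^2) has_derivative (\<lambda>h. 0)) (at q)"
    by (rule c) (use S_rel4 cf(2) in simp)
  have e2: "(\<phi> q$2 * D h$4 + D h$2 * \<phi> q$4) - (\<phi> q$1 * (of_nat 2 * D h $3 * (\<phi> q $3)^(2-1)) + D h$1 * (\<phi> q$3)^2) = 0"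
    using fun_cong[OF has_derivative_unique[OF d2 z2], of h] by simp
  show ?thesis using e1 e2 u q(2) by (simp add: algebra_simps)
qed

lemma S_param: "v \<in> surfS \<Longrightarrow> v$2 \<noteq> 0 \<Longrightarrow> v = rho (v$1) (v$3/v$2)"
proof -
  assume vS: "v \<in> surfS" and y: "v$2 \<noteq> 0"
  have "(v$2)^4 = (v$3)^3" "v$2 * v$4 = v$1 * (v$3)^2" "(v$1)^2 * (v$2)^2 * v$3 = (v$4)^2"
    using vS surfS_zero_set by (auto simp: Sgens_simps)
  from zero_set_imp_rho[OF this] y show ?thesis by simp
qed

lemma scaleR_eq_smult: "c *\<^sub>R (x::complex^'n) = complex_of_real c *s x"
  unfolding vec_eq_iff vector_scaleR_component vector_smult_component by (simp add: scaleR_conv_of_real)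

lemma csubspace_subspace: "csubspace T \<Longrightarrow> subspace (T :: (complex^'n) set)"
  unfolding csubspace_def subspace_def by (simp add: scaleR_eq_smult)

definition E12 :: "(complex^4) set" where "E12 = {v. v$3 = 0 \<and> v$4 = 0}"

lemma subspace_E12: "subspace E12"
  unfolding subspace_def E12_def by (simp add: vector_scaleR_component)

lemma reim1: "Re z *\<^sub>R 1 + Im z *\<^sub>R \<i> = z"
  by (simp add: complex_eq_iff)

lemma dim_E12: "dim E12 \<le> 4"
proof -
  define B :: "(complex^4) set" where "B = {axis 1 1, axis 1 \<i>, axis 2 1, axis 2 \<i>}"
  have "E12 \<subseteq> span B"
  proof
    fix v assume "v \<in> E12"
    then have v: "v$3 = 0" "v$4 = 0" by (auto simp: E12_def)
    have "v = Re (v$1) *\<^sub>R axis 1 1 + Im (v$1) *\<^sub>R axis 1 \<i> + Re (v$2) *\<^sub>R axis 2 1 + Im (v$2) *\<^sub>R axis 2 \<i>"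
      using v by (intro vec4_eqI) (simp_all add: axis_def vector_scaleR_component reim1)
    also have "\<dots> \<in> span B" unfolding B_def
      by (intro span_add span_scale span_base) auto
    finally show "v \<in> span B" .
  qed
  then have "dim E12 \<le> dim (span B)" by (rule dim_subset)
  also have "\<dots> = dim B" by (rule dim_span)
  also have "\<dots> \<le> card B" by (rule dim_le_card') (simp add: B_def)
  also have "\<dots> \<le> 4" unfolding B_def by (simp add: card_insert_if)
  finally show ?thesis .
qed

lemma tendsto_cuberoot0:
  fixes t :: "nat \<Rightarrow> complex"
  assumes "(\<lambda>n. t n ^ 3) \<longlonglongrightarrow> 0"
  shows "t \<longlonglongrightarrow> 0"
proof -
  have "(\<lambda>n. root 3 (norm (t n ^ 3))) \<longlonglongrightarrow> root 3 (norm (0::complex))"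
    by (intro tendsto_real_root tendsto_norm assms)
  moreover have "root 3 (norm (t n ^ 3)) = norm (t n)" for n
    by (simp add: norm_power real_root_power_cancel)
  ultimately have "(\<lambda>n. norm (t n)) \<longlonglongrightarrow> 0" by simp
  then show ?thesis by (rule tendsto_norm_zero_cancel)
qed

lemma tc_alg:
  fixes s u1 u2 u3 u4 b :: complex
  assumes s: "s \<noteq> 0" and c1: "4*(s^3)^3*u2 - 3*(s^4)^2*u3 = 0"
    and c2: "u2*(b * s^5) + s^3*u4 - (u1*(s^4)^2 + b*(2 * s^4*u3)) = 0"
  shows "u3 = 4/3 * s * u2 \<and> u4 = s^5*u1 - b * s^2*u2 + 2*b * s*u3"
proof -
  have "s^8 * (4 * s*u2 - 3*u3) = 4*(s^3)^3*u2 - 3*(s^4)^2*u3" by (simp add: algebra_simps eval_nat_numeral)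
  then have "4 * s*u2 - 3*u3 = 0" using c1 s by simp
  then have r1: "u3 = 4/3 * s * u2" by (simp add: field_simps)
  have "s^3 * (u4 - (s^5*u1 - b * s^2*u2 + 2*b * s*u3)) = u2*(b * s^5) + s^3*u4 - (u1*(s^4)^2 + b*(2 * s^4*u3))"
    by (simp add: algebra_simps eval_nat_numeral)
  then have "u4 - (s^5*u1 - b * s^2*u2 + 2*b * s*u3) = 0" using c2 s by simp
  then have r2: "u4 = s^5*u1 - b * s^2*u2 + 2*b * s*u3" by (simp only: right_minus_eq)
  show ?thesis using r1 r2 by blast
qed

lemma whitney: "whitney_regular_at0 surfS singline singline"
  unfolding whitney_regular_at0_def
proof (intro allI impI, elim conjE)
  fix x y :: "nat \<Rightarrow> complex^4" and Tn :: "nat \<Rightarrow> (complex^4) set" and T l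
  assume Hn: "\<forall>n. x n \<in> surfS - singline \<and> y n \<in> singline - {0} \<and> tangent_plane surfS (x n) (Tn n)"
    and xl: "x \<longlonglongrightarrow> 0" and yl: "y \<longlonglongrightarrow> 0" and csl: "csubspace l" and dl: "dim l = 2"
    and scl: "subspaces_converge (\<lambda>n. cline (x n - y n)) l"
    and csT: "csubspace T" and dT: "dim T = 4" and scT: "subspaces_converge Tn T"
  have xS: "x n \<in> surfS" and xns: "x n \<notin> singline" and yS: "y n \<in> singline"
    and tpn: "tangent_plane surfS (x n) (Tn n)" for n
    using Hn by blast+
  have x2: "x n $ 2 \<noteq> 0" for n by (rule S_not_singline[OF xS xns])
  define a where "a n = x n $ 1" for n
  define t where "t n = x n $ 3 / x n $ 2" for n
  have xat: "x n = rho (a n) (t n)" for n unfolding a_def t_def by (rule S_param[OF xS x2])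
  have tnz: "t n \<noteq> 0" for n
  proof
    assume "t n = 0"
    then have "x n $ 2 = 0" using xat[of n] by simp
    then show False using x2[of n] by simp
  qed
  have xlim: "(\<lambda>n. x n $ i) \<longlonglongrightarrow> 0" for i
    using tendsto_vec_nth[OF xl, of i] by simp
  have alim: "a \<longlonglongrightarrow> 0" using xlim[of 1] by (simp add: a_def[abs_def])
  have x2t: "x n $ 2 = t n ^ 3" for n using xat[of n] by simp
  have "(\<lambda>n. t n ^ 3) \<longlonglongrightarrow> 0" using xlim[of 2] by (simp add: x2t)
  then have tlim: "t \<longlonglongrightarrow> 0" by (rule tendsto_cuberoot0)
  have yz: "y n $ 2 = 0 \<and> y n $ 3 = 0 \<and> y n $ 4 = 0" for n
    using yS[of n] by (auto simp: singline_def)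
  have limzero: "L = 0" if "f \<longlonglongrightarrow> L" "g \<longlonglongrightarrow> 0" "\<And>n. f n = g n" for f g :: "nat \<Rightarrow> complex" and L
  proof -
    have "f = g" using that(3) by auto
    then show ?thesis using that(1,2) LIMSEQ_unique by blast
  qed
  have TE: "T \<subseteq> E12"
  proof
    fix v assume vT: "v \<in> T"
    then obtain vn where vn: "\<And>n. vn n \<in> Tn n" "vn \<longlonglongrightarrow> v"
      using scT vT unfolding subspaces_converge_def by blast
    have rel: "vn n $ 3 = 4/3 * t n * vn n $ 2 \<and> vn n $ 4 = t n ^ 5 * vn n $ 1 - a n * t n ^ 2 * vn n $ 2 + 2 * a n * t n * vn n $ 3" for n
    proof -
      have c: "4*(x n$2)^3* vn n$2 - 3*(x n$3)^2* vn n$3 = 0 \<and>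
          vn n$2*x n$4 + x n$2* vn n$4 - (vn n$1*(x n$3)^2 + x n$1*(2*x n$3* vn n$3)) = 0"
        by (rule tangent_constraint[OF tpn vn(1)])
      define s where "s = t n"
      define u1 where "u1 = vn n $ 1"
      define u2 where "u2 = vn n $ 2"
      define u3 where "u3 = vn n $ 3"
      define u4 where "u4 = vn n $ 4"
      define b where "b = a n"
      have s: "s \<noteq> 0" using tnz by (simp add: s_def)
      have c1: "4*(s^3)^3*u2 - 3*(s^4)^2*u3 = 0" and c2: "u2*(b* s^5) + s^3*u4 - (u1*(s^4)^2 + b*(2* s^4*u3)) = 0"
        using c xat[of n] by (simp_all add: s_def u1_def u2_def u3_def u4_def b_def)
      have "u3 = 4/3 * s * u2 \<and> u4 = s^5*u1 - b * s^2*u2 + 2*b * s*u3" by (rule tc_alg[OF s c1 c2])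
      then show ?thesis by (simp add: s_def u1_def u2_def u3_def u4_def b_def)
    qed
    have vl: "(\<lambda>n. vn n $ i) \<longlonglongrightarrow> v $ i" for i by (intro tendsto_vec_nth vn(2))
    have v3: "v $ 3 = 0"
    proof (rule limzero[OF vl[of 3]])
      show "(\<lambda>n. 4/3 * t n * vn n $ 2) \<longlonglongrightarrow> 0"
        using tendsto_mult[OF tendsto_mult[OF tendsto_const tlim] vl[of 2]] by simp
    qed (use rel in blast)
    have v4: "v $ 4 = 0"
    proof (rule limzero[OF vl[of 4]])
      show "(\<lambda>n. t n ^ 5 * vn n $ 1 - a n * t n ^ 2 * vn n $ 2 + 2 * a n * t n * vn n $ 3) \<longlonglongrightarrow> 0"
      proof -
        have "(\<lambda>n. t n ^ 5 * vn n $ 1 - a n * t n ^ 2 * vn n $ 2 + 2 * a n * t n * vn n $ 3) \<longlonglongrightarrow> 0 ^ 5 * v$1 - 0 * 0^2 * v$2 + 2 * 0 * 0 * v$3"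
          by (intro tendsto_add tendsto_diff tendsto_mult tendsto_power tendsto_const tlim alim vl)
        then show ?thesis by simp
      qed
    qed (use rel in blast)
    show "v \<in> E12" using v3 v4 by (simp add: E12_def)
  qed
  have TE': "T = E12"
    by (rule subspace_dim_equal[OF csubspace_subspace[OF csT] subspace_E12 TE]) (use dT dim_E12 in simp)
  have "singline \<subseteq> E12" by (auto simp: singline_def E12_def)
  moreover have "l \<subseteq> E12"
  proof
    fix v assume vl0: "v \<in> l"
    then obtain vn where vn: "\<And>n. vn n \<in> cline (x n - y n)" "vn \<longlonglongrightarrow> v"
      using scl vl0 unfolding subspaces_converge_def by blast
    have rel: "vn n $ 3 = t n * vn n $ 2 \<and> vn n $ 4 = a n * t n ^ 2 * vn n $ 2" for n
    proof -
      obtain c where c: "vn n = c *s (x n - y n)" using vn(1)[of n] by (auto simp: cline_def)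
      show ?thesis using yz[of n] unfolding c xat[of n]
        by (simp add: algebra_simps eval_nat_numeral)
    qed
    have vl: "(\<lambda>n. vn n $ i) \<longlonglongrightarrow> v $ i" for i by (intro tendsto_vec_nth vn(2))
    have v3: "v $ 3 = 0"
    proof (rule limzero[OF vl[of 3]])
      show "(\<lambda>n. t n * vn n $ 2) \<longlonglongrightarrow> 0"
        using tendsto_mult[OF tlim vl[of 2]] by simp
    qed (use rel in blast)
    have v4: "v $ 4 = 0"
    proof (rule limzero[OF vl[of 4]])
      show "(\<lambda>n. a n * t n ^ 2 * vn n $ 2) \<longlonglongrightarrow> 0"
      proof -
        have "(\<lambda>n. a n * t n ^ 2 * vn n $ 2) \<longlonglongrightarrow> 0 * 0^2 * v$2"
          by (intro tendsto_mult tendsto_power tlim alim vl)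
        then show ?thesis by simp
      qed
    qed (use rel in blast)
    show "v \<in> E12" using v3 v4 by (simp add: E12_def)
  qed
  ultimately show "singline \<subseteq> T \<and> l \<subseteq> T" using TE' by blast
qed

lemma cpoly4_neg: "cpoly4 f \<Longrightarrow> cpoly4 (\<lambda>v. - f v)"
proof -
  assume "cpoly4 f"
  then have "cpoly4 (\<lambda>v. (-1) * f v)" by (intro cpoly4.mult cpoly4.const)
  then show ?thesis by simp
qed

lemma cpoly4_diff: "cpoly4 f \<Longrightarrow> cpoly4 g \<Longrightarrow> cpoly4 (\<lambda>v. f v - g v)"
proof -
  assume "cpoly4 f" "cpoly4 g"
  then have "cpoly4 (\<lambda>v. f v + - g v)" by (intro cpoly4.add cpoly4_neg)
  then show ?thesis by simp
qed

lemma cpoly4_pow: "cpoly4 f \<Longrightarrow> cpoly4 (\<lambda>v. f v ^ n)"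
proof (induction n)
  case 0 then show ?case using cpoly4.const[of 1] by simp
next
  case (Suc n)
  then have "cpoly4 (\<lambda>v. f v * f v ^ n)" by (intro cpoly4.mult)
  then show ?case by simp
qed

lemma cpoly4_sum: "finite A \<Longrightarrow> (\<And>i. i \<in> A \<Longrightarrow> cpoly4 (f i)) \<Longrightarrow> cpoly4 (\<lambda>v. \<Sum>i\<in>A. f i v)"
proof (induction A rule: finite_induct)
  case empty then show ?case using cpoly4.const[of 0] by simp
next
  case (insert a A)
  then have "cpoly4 (\<lambda>v. f a v + (\<Sum>i\<in>A. f i v))" by (intro cpoly4.add) auto
  then show ?case using insert by simp
qed

lemma cpoly4_x: "cpoly4 (\<lambda>v. (v$i)^n)" by (intro cpoly4_pow cpoly4.coord)

lemma ideal_gen_zero: "(\<lambda>v. 0) \<in> ideal_gen gs"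
  unfolding ideal_gen_def by (rule CollectI, rule exI[of _ "\<lambda>i v. 0"]) (simp add: cpoly4.const)

lemma ideal_gen_add:
  assumes "f \<in> ideal_gen gs" "g \<in> ideal_gen gs"
  shows "(\<lambda>v. f v + g v) \<in> ideal_gen gs"
proof -
  obtain c where c: "\<forall>i<length gs. cpoly4 (c i)" "f = (\<lambda>v. \<Sum>i<length gs. c i v * (gs ! i) v)"
    using assms(1) unfolding ideal_gen_def by blast
  obtain d where d: "\<forall>i<length gs. cpoly4 (d i)" "g = (\<lambda>v. \<Sum>i<length gs. d i v * (gs ! i) v)"
    using assms(2) unfolding ideal_gen_def by blast
  show ?thesis unfolding ideal_gen_def
  proof (rule CollectI, rule exI[of _ "\<lambda>i v. c i v + d i v"], intro conjI allI impI)
    show "cpoly4 (\<lambda>v. c i v + d i v)" if "i < length gs" for i using c(1) d(1) that by (intro cpoly4.add) auto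
    show "(\<lambda>v. f v + g v) = (\<lambda>v. \<Sum>i<length gs. (c i v + d i v) * (gs ! i) v)"
      unfolding c(2) d(2) by (simp add: distrib_right sum.distrib)
  qed
qed

lemma ideal_gen_mult:
  assumes "cpoly4 p" "f \<in> ideal_gen gs"
  shows "(\<lambda>v. p v * f v) \<in> ideal_gen gs"
proof -
  obtain c where c: "\<forall>i<length gs. cpoly4 (c i)" "f = (\<lambda>v. \<Sum>i<length gs. c i v * (gs ! i) v)"
    using assms(2) unfolding ideal_gen_def by blast
  show ?thesis unfolding ideal_gen_def
  proof (rule CollectI, rule exI[of _ "\<lambda>i v. p v * c i v"], intro conjI allI impI)
    show "cpoly4 (\<lambda>v. p v * c i v)" if "i < length gs" for i using c(1) assms(1) that by (intro cpoly4.mult) auto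
    show "(\<lambda>v. p v * f v) = (\<lambda>v. \<Sum>i<length gs. (p v * c i v) * (gs ! i) v)"
      unfolding c(2) by (simp add: sum_distrib_left mult.assoc)
  qed
qed

lemma ideal_gen_gen:
  assumes "k < length gs"
  shows "gs ! k \<in> ideal_gen gs"
  unfolding ideal_gen_def
proof (rule CollectI, rule exI[of _ "\<lambda>i v. if i = k then 1 else 0"], intro conjI allI impI)
  show "cpoly4 (\<lambda>v. if i = k then 1 else 0)" for i by (rule cpoly4.const)
  have "(\<Sum>i<length gs. (if i = k then 1 else 0) * (gs ! i) v) = (gs ! k) v" for v
    using assms by (simp add: if_distrib[of "\<lambda>x. x * _"] sum.delta cong: if_cong)
  then show "gs ! k = (\<lambda>v. \<Sum>i<length gs. (if i = k then 1 else 0) * (gs ! i) v)" by auto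
qed

lemma ideal_gen_mult_gen:
  "cpoly4 p \<Longrightarrow> k < length gs \<Longrightarrow> (\<lambda>v. p v * (gs ! k) v) \<in> ideal_gen gs"
  by (rule ideal_gen_mult[OF _ ideal_gen_gen])

lemma ideal_gen_cong: "f \<in> ideal_gen gs \<Longrightarrow> (\<And>v. f v = g v) \<Longrightarrow> g \<in> ideal_gen gs"
proof -
  assume "f \<in> ideal_gen gs" "\<And>v. f v = g v"
  moreover have "f = g" using \<open>\<And>v. f v = g v\<close> by auto
  ultimately show ?thesis by simp
qed

lemma ideal_gen_cpoly:
  assumes "\<forall>i<length gs. cpoly4 (gs ! i)" "f \<in> ideal_gen gs"
  shows "cpoly4 f"
proof -
  obtain c where c: "\<forall>i<length gs. cpoly4 (c i)" "f = (\<lambda>v. \<Sum>i<length gs. c i v * (gs ! i) v)"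
    using assms(2) unfolding ideal_gen_def by blast
  show ?thesis unfolding c(2) using c(1) assms(1) by (intro cpoly4_sum cpoly4.mult) auto
qed

lemma ideal_gen_vanish:
  assumes "f \<in> ideal_gen gs" "\<forall>i<length gs. (gs ! i) v = 0"
  shows "f v = 0"
proof -
  obtain c where c: "f = (\<lambda>v. \<Sum>i<length gs. c i v * (gs ! i) v)"
    using assms(1) unfolding ideal_gen_def by blast
  show ?thesis unfolding c using assms(2) by simp
qed

lemma Sgens_nth:
  "Sgens ! 0 = (\<lambda>v. (v$2)^4 - (v$3)^3)"
  "Sgens ! 1 = (\<lambda>v. v$2 * v$4 - v$1 * (v$3)^2)"
  "Sgens ! 2 = (\<lambda>v. v$3 * v$4 - v$1 * (v$2)^3)"
  "Sgens ! 3 = (\<lambda>v. (v$1)^3 * (v$2)^5 - (v$4)^3)"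
  "Sgens ! 4 = (\<lambda>v. (v$1)^2 * (v$2)^2 * v$3 - (v$4)^2)"
  by (simp_all add: Sgens_def)

abbreviation "IS \<equiv> ideal_gen Sgens"

lemma IS_gen: "cpoly4 p \<Longrightarrow> k < 5 \<Longrightarrow> (\<lambda>v. p v * (Sgens ! k) v) \<in> IS"
  by (rule ideal_gen_mult_gen) (simp_all add: Sgens_simps)

fun mon :: "nat \<times> nat \<times> nat \<times> bool \<Rightarrow> complex^4 \<Rightarrow> complex" where
  "mon (i,j,k,b) v = (if b then (v$1)^i * v$4 else (v$1)^i * (v$2)^j * (v$3)^k)"

fun normal :: "nat \<times> nat \<times> nat \<times> bool \<Rightarrow> bool" where
  "normal (i,j,k,b) = (if b then j = 0 \<and> k = 0 else k < 3)"

lemma IS_eq: "f \<in> IS \<Longrightarrow> (\<And>v. f v = g v) \<Longrightarrow> g \<in> IS"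
  by (rule ideal_gen_cong)

lemma coord_mon:
  assumes "normal m"
  shows "\<exists>m'. normal m' \<and> (\<lambda>v. v$r * mon m v - mon m' v) \<in> IS"
proof -
  obtain i j k b where m: "m = (i,j,k,b)" by (cases m) auto
  have z: "(\<lambda>v. 0) \<in> IS" by (rule ideal_gen_zero)
  consider "r = 1" | "r = 2" | "r = 3" | "r = 4" using exhaust_4 by blast
  then show ?thesis
  proof cases
    case 1
    show ?thesis
      by (rule exI[of _ "(Suc i,j,k,b)"]) (use assms in \<open>auto simp: m 1 intro!: IS_eq[OF z]\<close>)
  next
    case 2
    show ?thesis
    proof (cases b)
      case False
      show ?thesis
        by (rule exI[of _ "(i,Suc j,k,False)"]) (use assms False in \<open>auto simp: m 2 intro!: IS_eq[OF z]\<close>)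
    next
      case True
      then have jk: "j = 0" "k = 0" using assms m by auto
      show ?thesis
      proof (rule exI[of _ "(Suc i,0,2,False)"], intro conjI)
        show "(\<lambda>v. v $ r * mon m v - mon (Suc i, 0, 2, False) v) \<in> IS"
          by (rule IS_eq[OF IS_gen[OF cpoly4_x[of 1 i], of 1]]) (simp_all add: m 2 True Sgens_def algebra_simps)
      qed simp
    qed
  next
    case 3
    show ?thesis
    proof (cases b)
      case False
      then have "k < 3" using assms m by auto
      then consider "k < 2" | "k = 2" by linarith
      then show ?thesis
      proof cases
        case 1
        show ?thesis
          by (rule exI[of _ "(i,j,Suc k,False)"]) (use 1 False in \<open>auto simp: m 3 intro!: IS_eq[OF z]\<close>)
      next
        case k2: 2
        show ?thesis
        proof (rule exI[of _ "(i,j+4,0,False)"], intro conjI)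
          have cp: "cpoly4 (\<lambda>v. - ((v$1)^i * (v$2)^j))" by (intro cpoly4_neg cpoly4.mult cpoly4_x)
          show "(\<lambda>v. v $ r * mon m v - mon (i,j+4,0,False) v) \<in> IS"
            by (rule IS_eq[OF IS_gen[OF cp, of 0]]) (simp_all add: m 3 False k2 Sgens_def algebra_simps power_add eval_nat_numeral)
        qed simp
      qed
    next
      case True
      then have jk: "j = 0" "k = 0" using assms m by auto
      show ?thesis
      proof (rule exI[of _ "(Suc i,3,0,False)"], intro conjI)
        show "(\<lambda>v. v $ r * mon m v - mon (Suc i, 3, 0, False) v) \<in> IS"
          by (rule IS_eq[OF IS_gen[OF cpoly4_x[of 1 i], of 2]]) (simp_all add: m 3 True jk Sgens_def algebra_simps)
      qed simp
    qed
  next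
    case 4
    show ?thesis
    proof (cases b)
      case True
      then have jk: "j = 0" "k = 0" using assms m by auto
      show ?thesis
      proof (rule exI[of _ "(i+2,2,1,False)"], intro conjI)
        have cp: "cpoly4 (\<lambda>v. - ((v$1)^i))" by (intro cpoly4_neg cpoly4_x)
        show "(\<lambda>v. v $ r * mon m v - mon (i+2,2,1,False) v) \<in> IS"
          by (rule IS_eq[OF IS_gen[OF cp, of 4]]) (simp_all add: m 4 True jk Sgens_def algebra_simps power_add eval_nat_numeral)
      qed simp
    next
      case False
      then have "k < 3" using assms m by auto
      show ?thesis
      proof (cases k)
        case (Suc k')
        show ?thesis
        proof (rule exI[of _ "(Suc i,j+3,k',False)"], intro conjI)
          have cp: "cpoly4 (\<lambda>v. (v$1)^i * (v$2)^j * (v$3)^k')" by (intro cpoly4.mult cpoly4_x)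
          show "(\<lambda>v. v $ r * mon m v - mon (Suc i,j+3,k',False) v) \<in> IS"
            by (rule IS_eq[OF IS_gen[OF cp, of 2]]) (simp_all add: m 4 False Suc Sgens_def algebra_simps power_add eval_nat_numeral)
        qed (use \<open>k < 3\<close> Suc in simp)
      next
        case 0
        show ?thesis
        proof (cases j)
          case 0
          show ?thesis
            by (rule exI[of _ "(i,0,0,True)"]) (use \<open>k = 0\<close> 0 False in \<open>auto simp: m 4 intro!: IS_eq[OF z]\<close>)
        next
          case (Suc j')
          show ?thesis
          proof (rule exI[of _ "(Suc i,j',2,False)"], intro conjI)
            have cp: "cpoly4 (\<lambda>v. (v$1)^i * (v$2)^j')" by (intro cpoly4.mult cpoly4_x)
            show "(\<lambda>v. v $ r * mon m v - mon (Suc i,j',2,False) v) \<in> IS"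
              by (rule IS_eq[OF IS_gen[OF cp, of 1]]) (simp_all add: m 4 False Suc \<open>k = 0\<close> Sgens_def algebra_simps)
          qed simp
        qed
      qed
    qed
  qed
qed

inductive_set NFS :: "(complex^4 \<Rightarrow> complex) set" where
  NFS0: "(\<lambda>v. 0) \<in> NFS"
| NFSstep: "f \<in> NFS \<Longrightarrow> normal m \<Longrightarrow> (\<lambda>v. f v + c * mon m v) \<in> NFS"

lemma NFS_add: "g \<in> NFS \<Longrightarrow> f \<in> NFS \<Longrightarrow> (\<lambda>v. f v + g v) \<in> NFS"
proof (induction g rule: NFS.induct)
  case NFS0 then show ?case by simp
next
  case (NFSstep g m c)
  then have "(\<lambda>v. (f v + g v) + c * mon m v) \<in> NFS" by (intro NFS.NFSstep) auto
  then show ?case by (simp add: add.assoc)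
qed

lemma NFS_scal: "f \<in> NFS \<Longrightarrow> (\<lambda>v. d * f v) \<in> NFS"
proof (induction f rule: NFS.induct)
  case NFS0 then show ?case using NFS.NFS0 by simp
next
  case (NFSstep f m c)
  then have "(\<lambda>v. d * f v + (d * c) * mon m v) \<in> NFS" by (intro NFS.NFSstep) auto
  then show ?case by (simp add: distrib_left mult.assoc)
qed

lemma exI_NFS: "g \<in> NFS \<Longrightarrow> (\<lambda>v. h v - g v) \<in> IS \<Longrightarrow> \<exists>g\<in>NFS. (\<lambda>v. h v - g v) \<in> IS"
  by blast

lemma NFS_coord: "f \<in> NFS \<Longrightarrow> \<exists>g\<in>NFS. (\<lambda>v. v$r * f v - g v) \<in> IS"
proof (induction f rule: NFS.induct)
  case NFS0
  show ?case by (rule bexI[OF _ NFS.NFS0]) (simp add: ideal_gen_zero)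
next
  case (NFSstep f m c)
  obtain g where g: "g \<in> NFS" "(\<lambda>v. v$r * f v - g v) \<in> IS" using NFSstep.IH by blast
  obtain m' where m': "normal m'" "(\<lambda>v. v$r * mon m v - mon m' v) \<in> IS"
    using coord_mon[OF NFSstep.hyps(2)] by blast
  have "(\<lambda>v. (v$r * f v - g v) + c * (v$r * mon m v - mon m' v)) \<in> IS"
    by (intro ideal_gen_add ideal_gen_mult[OF cpoly4.const] g(2) m'(2))
  then have "(\<lambda>v. v$r * (f v + c * mon m v) - (g v + c * mon m' v)) \<in> IS"
    by (rule IS_eq) (simp add: algebra_simps)
  moreover have "(\<lambda>v. g v + c * mon m' v) \<in> NFS" by (rule NFS.NFSstep[OF g(1) m'(1)])
  ultimately show ?case by (intro exI_NFS[where h="\<lambda>v. v$r * (f v + c * mon m v)"])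
qed

definition RR :: "(complex^4 \<Rightarrow> complex) set" where
  "RR = {f. \<exists>N\<in>NFS. (\<lambda>v. f v - N v) \<in> IS}"

lemma RR_I: "N \<in> NFS \<Longrightarrow> (\<lambda>v. f v - N v) \<in> IS \<Longrightarrow> f \<in> RR"
  unfolding RR_def by blast

lemma RR_add: "f \<in> RR \<Longrightarrow> g \<in> RR \<Longrightarrow> (\<lambda>v. f v + g v) \<in> RR"
proof -
  assume "f \<in> RR" "g \<in> RR"
  then obtain N M where N: "N \<in> NFS" "(\<lambda>v. f v - N v) \<in> IS" and M: "M \<in> NFS" "(\<lambda>v. g v - M v) \<in> IS"
    unfolding RR_def by blast
  have "(\<lambda>v. (f v - N v) + (g v - M v)) \<in> IS" by (rule ideal_gen_add[OF N(2) M(2)])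
  then have "(\<lambda>v. (f v + g v) - (N v + M v)) \<in> IS" by (rule IS_eq) (simp add: algebra_simps)
  moreover have "(\<lambda>v. N v + M v) \<in> NFS" by (rule NFS_add[OF M(1) N(1)])
  ultimately show ?thesis by (intro RR_I[where f="\<lambda>v. f v + g v"])
qed

lemma RR_scal: "f \<in> RR \<Longrightarrow> (\<lambda>v. d * f v) \<in> RR"
proof -
  assume "f \<in> RR"
  then obtain N where N: "N \<in> NFS" "(\<lambda>v. f v - N v) \<in> IS" unfolding RR_def by blast
  have "(\<lambda>v. d * (f v - N v)) \<in> IS" by (rule ideal_gen_mult[OF cpoly4.const N(2)])
  then have "(\<lambda>v. d * f v - d * N v) \<in> IS" by (rule IS_eq) (simp add: algebra_simps)
  moreover have "(\<lambda>v. d * N v) \<in> NFS" by (rule NFS_scal[OF N(1)])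
  ultimately show ?thesis by (intro RR_I[where f="\<lambda>v. d * f v"])
qed

lemma RR_coord: "f \<in> RR \<Longrightarrow> (\<lambda>v. v$r * f v) \<in> RR"
proof -
  assume "f \<in> RR"
  then obtain N where N: "N \<in> NFS" "(\<lambda>v. f v - N v) \<in> IS" unfolding RR_def by blast
  obtain g where g: "g \<in> NFS" "(\<lambda>v. v$r * N v - g v) \<in> IS" using NFS_coord[OF N(1)] by blast
  have "(\<lambda>v. v$r * (f v - N v) + (v$r * N v - g v)) \<in> IS"
    by (intro ideal_gen_add ideal_gen_mult[OF cpoly4.coord] N(2) g(2))
  then have "(\<lambda>v. v$r * f v - g v) \<in> IS" by (rule IS_eq) (simp add: algebra_simps)
  then show ?thesis using g(1) by (intro RR_I[where f="\<lambda>v. v$r * f v"])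
qed

lemma RR_one: "(\<lambda>v. 1) \<in> RR"
proof -
  have "(\<lambda>v. 0 + 1 * mon (0,0,0,False) v) \<in> NFS" by (rule NFS.NFSstep[OF NFS.NFS0]) simp
  moreover have "(\<lambda>v. 1 - (0 + 1 * mon (0,0,0,False) v)) \<in> IS"
    by (rule IS_eq[OF ideal_gen_zero]) simp
  ultimately show ?thesis by (intro RR_I[where f="\<lambda>v. 1"])
qed

lemma RR_mult: "cpoly4 p \<Longrightarrow> g \<in> RR \<Longrightarrow> (\<lambda>v. p v * g v) \<in> RR"
proof (induction p arbitrary: g rule: cpoly4.induct)
  case (const c) then show ?case by (rule RR_scal)
next
  case (coord i) then show ?case by (rule RR_coord)
next
  case (add f h)
  then have "(\<lambda>v. f v * g v + h v * g v) \<in> RR" by (intro RR_add) auto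
  then show ?case by (simp add: distrib_right)
next
  case (mult f h)
  then have "(\<lambda>v. f v * (h v * g v)) \<in> RR" by auto
  then show ?case by (simp add: mult.assoc)
qed

lemma RR_all: "cpoly4 p \<Longrightarrow> p \<in> RR"
  using RR_mult[OF _ RR_one, of p] by simp

lemma NFS_sum: "f \<in> NFS \<Longrightarrow> \<exists>(N::nat) c \<mu>. (\<forall>l<N. normal (\<mu> l)) \<and> (\<forall>v. f v = (\<Sum>l<N. c l * mon (\<mu> l) v))"
proof (induction f rule: NFS.induct)
  case NFS0
  show ?case by (rule exI[where x="0::nat"]) simp
next
  case (NFSstep f m c0)
  obtain N :: nat and c \<mu> where H: "\<forall>l<N. normal (\<mu> l)" "\<forall>v. f v = (\<Sum>l<N. c l * mon (\<mu> l) v)"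
    using NFSstep.IH by blast
  define c' where "c' = c(N := c0)"
  define \<mu>' where "\<mu>' = \<mu>(N := m)"
  have "\<forall>l<Suc N. normal (\<mu>' l)" using H(1) NFSstep.hyps(2) by (auto simp: \<mu>'_def less_Suc_eq)
  moreover have "f v + c0 * mon m v = (\<Sum>l<Suc N. c' l * mon (\<mu>' l) v)" for v
  proof -
    have "(\<Sum>l<N. c' l * mon (\<mu>' l) v) = (\<Sum>l<N. c l * mon (\<mu> l) v)"
      by (rule sum.cong) (auto simp: c'_def \<mu>'_def)
    then show ?thesis using H(2) by (simp add: c'_def \<mu>'_def)
  qed
  ultimately show ?case by blast
qed

fun alp :: "nat \<times> nat \<times> nat \<times> bool \<Rightarrow> nat" where
  "alp (i,j,k,b) = (if b then Suc i else i)"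
fun bet :: "nat \<times> nat \<times> nat \<times> bool \<Rightarrow> nat" where
  "bet (i,j,k,b) = (if b then 5 else 3*j + 4*k)"

lemma mon_rho: "mon m (rho a t) = a ^ alp m * t ^ bet m"
proof -
  obtain i j k b where m: "m = (i,j,k,b)" by (cases m) auto
  show ?thesis
  proof (cases b)
    case True then show ?thesis by (simp add: m)
  next
    case False
    have "t ^ (3*j + 4*k) = (t^3)^j * (t^4)^k" by (simp add: power_add power_mult)
    then show ?thesis using False by (simp add: m mult.assoc)
  qed
qed

lemma ab_inj:
  assumes "normal m" "normal m'" "alp m = alp m'" "bet m = bet m'"
  shows "m = m'"
proof -
  obtain i j k b where m: "m = (i,j,k,b)" by (cases m) auto
  obtain i' j' k' b' where m': "m' = (i',j',k',b')" by (cases m') auto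
  show ?thesis
  proof (cases b; cases b')
    assume "b" "b'" then show ?thesis using assms by (simp add: m m')
  next
    assume "b" "\<not> b'"
    then have "5 = 3*j' + 4*k'" using assms by (simp add: m m')
    then have False by presburger
    then show ?thesis ..
  next
    assume "\<not> b" "b'"
    then have "3*j + 4*k = 5" using assms by (simp add: m m')
    then have False by presburger
    then show ?thesis ..
  next
    assume nb: "\<not> b" "\<not> b'"
    then have "i = i'" "3*j + 4*k = 3*j' + 4*k'" "k < 3" "k' < 3" using assms by (simp_all add: m m')
    then have "j = j'" "k = k'" by presburger+
    then show ?thesis using nb \<open>i = i'\<close> by (simp add: m m')
  qed
qed

lemma poly1:
  fixes c :: "'l \<Rightarrow> complex" and e :: "'l \<Rightarrow> nat"
  assumes A: "finite A" and z: "\<And>x. (\<Sum>l\<in>A. c l * x ^ e l) = 0"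
  shows "(\<Sum>l\<in>{l\<in>A. e l = p}. c l) = 0"
proof -
  define n where "n = (\<Sum>l\<in>A. e l)"
  have en: "e l \<le> n" if "l \<in> A" for l unfolding n_def by (rule member_le_sum[OF that _ A]) simp
  define C where "C i = (\<Sum>l\<in>{l\<in>A. e l = i}. c l)" for i
  have eq: "(\<Sum>l\<in>A. c l * x ^ e l) = (\<Sum>i\<le>n. C i * x^i)" for x
  proof -
    have "(\<Sum>l\<in>A. c l * x ^ e l) = (\<Sum>i\<le>n. \<Sum>l\<in>{l. l \<in> A \<and> e l = i}. c l * x ^ e l)"
      by (rule sum.group[symmetric]) (use A en in auto)
    also have "\<dots> = (\<Sum>i\<le>n. C i * x^i)"
      unfolding C_def sum_distrib_right by (intro sum.cong refl) auto
    finally show ?thesis .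
  qed
  have "\<forall>x. (\<Sum>i\<le>n. C i * x^i) = 0" using z eq by simp
  then have Cz: "\<forall>i\<le>n. C i = 0" using polyfun_eq_0[of C n] by blast
  show ?thesis
  proof (cases "p \<le> n")
    case True then show ?thesis using Cz by (simp add: C_def)
  next
    case False
    then have "{l\<in>A. e l = p} = {}" using en by fastforce
    then show ?thesis by (simp only: sum.empty)
  qed
qed

lemma poly2:
  fixes c :: "'l \<Rightarrow> complex" and ea eb :: "'l \<Rightarrow> nat"
  assumes A: "finite A" and z: "\<And>a t. (\<Sum>l\<in>A. c l * (a ^ ea l * t ^ eb l)) = 0"
  shows "(\<Sum>l\<in>{l\<in>A. ea l = p \<and> eb l = r}. c l) = 0"
proof -
  have z1: "(\<Sum>l\<in>{l\<in>A. ea l = p}. c l * t ^ eb l) = 0" for t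
  proof (rule poly1[OF A, where c="\<lambda>l. c l * t ^ eb l"])
    show "(\<Sum>l\<in>A. c l * t ^ eb l * x ^ ea l) = 0" for x
      using z[of x t] by (simp add: algebra_simps)
  qed
  have "(\<Sum>l\<in>{l\<in>{l\<in>A. ea l = p}. eb l = r}. c l) = 0"
    by (rule poly1) (use A z1 in auto)
  moreover have "{l\<in>{l\<in>A. ea l = p}. eb l = r} = {l\<in>A. ea l = p \<and> eb l = r}" by auto
  ultimately show ?thesis by simp
qed

lemma NFS_vanish:
  assumes f: "f \<in> NFS" and van: "\<forall>v\<in>surfS. f v = 0"
  shows "f v = 0"
proof -
  obtain N :: nat and c \<mu> where H: "\<forall>l<N. normal (\<mu> l)" "\<forall>v. f v = (\<Sum>l<N. c l * mon (\<mu> l) v)"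
    using NFS_sum[OF f] by blast
  have z: "(\<Sum>l\<in>{..<N}. c l * (a ^ alp (\<mu> l) * t ^ bet (\<mu> l))) = 0" for a t
  proof -
    have "rho a t \<in> surfS" by (auto simp: mem_surfS)
    then have "f (rho a t) = 0" using van by blast
    then show ?thesis using H(2) by (simp add: mon_rho)
  qed
  have cz: "(\<Sum>l\<in>{l\<in>{..<N}. alp (\<mu> l) = p \<and> bet (\<mu> l) = r}. c l) = 0" for p r
    by (rule poly2[where ea="\<lambda>l. alp (\<mu> l)" and eb="\<lambda>l. bet (\<mu> l)"]) (use z in simp_all)
  have "f v = (\<Sum>l\<in>{..<N}. c l * mon (\<mu> l) v)" using H(2) by simp
  also have "\<dots> = (\<Sum>m\<in>\<mu> ` {..<N}. \<Sum>l\<in>{l. l \<in> {..<N} \<and> \<mu> l = m}. c l * mon (\<mu> l) v)"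
    by (rule sum.group[symmetric]) auto
  also have "\<dots> = (\<Sum>m\<in>\<mu> ` {..<N}. 0)"
  proof (rule sum.cong[OF refl])
    fix m assume "m \<in> \<mu> ` {..<N}"
    then obtain l0 where l0: "l0 < N" "m = \<mu> l0" by auto
    have nm: "normal m" using H(1) l0 by simp
    have set: "{l. l \<in> {..<N} \<and> \<mu> l = m} = {l\<in>{..<N}. alp (\<mu> l) = alp m \<and> bet (\<mu> l) = bet m}"
    proof -
      have "\<mu> l = m \<longleftrightarrow> alp (\<mu> l) = alp m \<and> bet (\<mu> l) = bet m" if "l < N" for l
        using ab_inj[OF H(1)[rule_format, OF that] nm] by (auto simp del: alp.simps bet.simps normal.simps)
      then show ?thesis by (auto simp del: alp.simps bet.simps normal.simps)
    qed
    have "(\<Sum>l\<in>{l. l \<in> {..<N} \<and> \<mu> l = m}. c l * mon (\<mu> l) v) = (\<Sum>l\<in>{l. l \<in> {..<N} \<and> \<mu> l = m}. c l * mon m v)"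
      by (rule sum.cong) auto
    also have "\<dots> = (\<Sum>l\<in>{l. l \<in> {..<N} \<and> \<mu> l = m}. c l) * mon m v" by (simp add: sum_distrib_right)
    also have "\<dots> = 0" unfolding set using cz by simp
    finally show "(\<Sum>l\<in>{l. l \<in> {..<N} \<and> \<mu> l = m}. c l * mon (\<mu> l) v) = 0" .
  qed
  also have "\<dots> = 0" by simp
  finally show ?thesis .
qed

lemma Sgens_cpoly: "\<forall>i<length Sgens. cpoly4 (Sgens ! i)"
proof -
  have "cpoly4 g" if "g \<in> set Sgens" for g
    using that unfolding Sgens_simps(2)
    by (auto intro!: cpoly4_diff cpoly4.mult cpoly4_x cpoly4.coord)
  then show ?thesis by auto
qed

lemma Sgens_vanish: "v \<in> surfS \<Longrightarrow> \<forall>i<length Sgens. (Sgens ! i) v = 0"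
  by (metis (mono_tags) mem_Collect_eq nth_mem surfS_zero_set)

lemma ideal_part: "{f. cpoly4 f \<and> (\<forall>v\<in>surfS. f v = 0)} = ideal_gen Sgens"
proof
  show "ideal_gen Sgens \<subseteq> {f. cpoly4 f \<and> (\<forall>v\<in>surfS. f v = 0)}"
    using ideal_gen_cpoly[OF Sgens_cpoly] ideal_gen_vanish Sgens_vanish by blast
  show "{f. cpoly4 f \<and> (\<forall>v\<in>surfS. f v = 0)} \<subseteq> ideal_gen Sgens"
  proof
    fix f assume "f \<in> {f. cpoly4 f \<and> (\<forall>v\<in>surfS. f v = 0)}"
    then have cf: "cpoly4 f" and vf: "\<forall>v\<in>surfS. f v = 0" by auto
    obtain N where N: "N \<in> NFS" "(\<lambda>v. f v - N v) \<in> IS" using RR_all[OF cf] unfolding RR_def by blast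
    have "\<forall>v\<in>surfS. N v = 0"
    proof
      fix v assume vS: "v \<in> surfS"
      have "f v - N v = 0" by (rule ideal_gen_vanish[OF N(2) Sgens_vanish[OF vS]])
      then show "N v = 0" using vf vS by simp
    qed
    then have "N v = 0" for v by (rule NFS_vanish[OF N(1)])
    then show "f \<in> ideal_gen Sgens" using N(2) by (intro IS_eq[OF N(2)]) simp
  qed
qed

abbreviation ax4 :: "complex \<Rightarrow> complex^4" where "ax4 s \<equiv> axis 4 s"

lemma ax4_nth: "ax4 s $ 1 = 0" "ax4 s $ 2 = 0" "ax4 s $ 3 = 0" "ax4 s $ 4 = s"
  by (simp_all add: axis_def)

lemma ax4_0: "ax4 0 = 0" by (simp add: axis_def vec_eq_iff)

lemma cpoly4_deriv: "cpoly4 f \<Longrightarrow> \<exists>D. ((\<lambda>s. f (ax4 s)) has_field_derivative D) (at 0)"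
proof (induction f rule: cpoly4.induct)
  case (const c) then show ?case by (auto intro: DERIV_const)
next
  case (coord i)
  have "((\<lambda>s. ax4 s $ i) has_field_derivative (if i = 4 then 1 else 0)) (at 0)"
  proof (cases "i = 4")
    case True
    then have "(\<lambda>s. ax4 s $ i) = (\<lambda>s. s)" by (auto simp: axis_def)
    then show ?thesis using True by (simp add: DERIV_ident)
  next
    case False
    then have "(\<lambda>s. ax4 s $ i) = (\<lambda>s. 0)" by (auto simp: axis_def)
    then show ?thesis using False by (simp add: DERIV_const)
  qed
  then show ?case by blast
next
  case (add f g) then show ?case by (auto intro: DERIV_add)
next
  case (mult f g) then show ?case by (auto intro: DERIV_mult)
qed

lemma Jgens_len: "length Jgens = 6" by (simp add: Jgens_def Sgens_def)

lemma Jgens_ax4: "k < 6 \<Longrightarrow> ((\<lambda>s. (Jgens ! k) (ax4 s)) has_field_derivative 0) (at 0) \<and> (Jgens ! k) (ax4 0) = 0"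
proof -
  assume "k < 6"
  then consider "k = 0" | "k = 1" | "k = 2" | "k = 3" | "k = 4" | "k = 5" by linarith
  then show ?thesis
  proof cases
    case 1
    then have e: "(\<lambda>s. (Jgens ! k) (ax4 s)) = (\<lambda>s. 0)" by (auto simp: Jgens_def Sgens_def ax4_nth)
    show ?thesis using fun_cong[OF e, of 0] by (simp add: e DERIV_const)
  next
    case 2
    then have e: "(\<lambda>s. (Jgens ! k) (ax4 s)) = (\<lambda>s. 0)" by (auto simp: Jgens_def Sgens_def ax4_nth)
    show ?thesis using fun_cong[OF e, of 0] by (simp add: e DERIV_const)
  next
    case 3
    then have e: "(\<lambda>s. (Jgens ! k) (ax4 s)) = (\<lambda>s. 0)" by (auto simp: Jgens_def Sgens_def ax4_nth)
    show ?thesis using fun_cong[OF e, of 0] by (simp add: e DERIV_const)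
  next
    case 4
    then have e: "(\<lambda>s. (Jgens ! k) (ax4 s)) = (\<lambda>s. - (s^3))" by (auto simp: Jgens_def Sgens_def ax4_nth)
    have "((\<lambda>s::complex. - (s^3)) has_field_derivative 0) (at 0)"
      by (auto intro!: derivative_eq_intros)
    then show ?thesis using fun_cong[OF e, of 0] unfolding e by simp
  next
    case 5
    then have e: "(\<lambda>s. (Jgens ! k) (ax4 s)) = (\<lambda>s. - (s^2))" by (auto simp: Jgens_def Sgens_def ax4_nth)
    have "((\<lambda>s::complex. - (s^2)) has_field_derivative 0) (at 0)"
      by (auto intro!: derivative_eq_intros)
    then show ?thesis using fun_cong[OF e, of 0] unfolding e by simp
  next
    case 6
    then have e: "(\<lambda>s. (Jgens ! k) (ax4 s)) = (\<lambda>s. 0)" by (auto simp: Jgens_def Sgens_def ax4_nth)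
    show ?thesis using fun_cong[OF e, of 0] by (simp add: e DERIV_const)
  qed
qed

lemma J_ideal_deriv0:
  assumes "f \<in> ideal_gen Jgens"
  shows "((\<lambda>s. f (ax4 s)) has_field_derivative 0) (at 0)"
proof -
  obtain c where c: "\<forall>i<length Jgens. cpoly4 (c i)" "f = (\<lambda>v. \<Sum>i<length Jgens. c i v * (Jgens ! i) v)"
    using assms unfolding ideal_gen_def by blast
  have "((\<lambda>s. \<Sum>i<length Jgens. c i (ax4 s) * (Jgens ! i) (ax4 s)) has_field_derivative (\<Sum>i<length Jgens. 0)) (at 0)"
  proof (rule DERIV_sum)
    fix i assume "i \<in> {..<length Jgens}"
    then have i: "i < 6" by (simp add: Jgens_len)
    obtain D where D: "((\<lambda>s. c i (ax4 s)) has_field_derivative D) (at 0)"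
      using cpoly4_deriv c(1) i by (auto simp: Jgens_len)
    have "((\<lambda>s. c i (ax4 s) * (Jgens ! i) (ax4 s)) has_field_derivative
        D * (Jgens ! i) (ax4 0) + 0 * c i (ax4 0)) (at 0)"
      using Jgens_ax4[OF i] by (intro DERIV_mult[OF D]) blast
    then show "((\<lambda>s. c i (ax4 s) * (Jgens ! i) (ax4 s)) has_field_derivative 0) (at 0)"
      using Jgens_ax4[OF i] by simp
  qed
  then show ?thesis unfolding c(2) by simp
qed

lemma not_loc_w: "\<not> loc_mem0 Jgens (\<lambda>v. v$4)"
proof
  assume "loc_mem0 Jgens (\<lambda>v. v$4)"
  then obtain u where u: "cpoly4 u" "u 0 \<noteq> 0" "(\<lambda>v. u v * v$4) \<in> ideal_gen Jgens"
    unfolding loc_mem0_def by blast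
  obtain U where U: "((\<lambda>s. u (ax4 s)) has_field_derivative U) (at 0)" using cpoly4_deriv[OF u(1)] by blast
  have w: "((\<lambda>s. ax4 s $ 4) has_field_derivative 1) (at 0)" by (simp add: ax4_nth DERIV_ident)
  have "((\<lambda>s. u (ax4 s) * ax4 s $ 4) has_field_derivative U * ax4 0 $ 4 + 1 * u (ax4 0)) (at 0)"
    by (rule DERIV_mult[OF U w])
  then have d1: "((\<lambda>s. u (ax4 s) * ax4 s $ 4) has_field_derivative u 0) (at 0)" by (simp add: ax4_0)
  have d0: "((\<lambda>s. u (ax4 s) * ax4 s $ 4) has_field_derivative 0) (at 0)"
    using J_ideal_deriv0[OF u(3)] by simp
  have "u 0 = 0" using DERIV_unique[OF d1 d0] .
  then show False using u(2) by simp
qed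

lemma J_mem: "(\<lambda>v. v$i * v$4) \<in> ideal_gen Jgens"
proof -
  have J5: "Jgens ! 5 = (\<lambda>v. v$1)" by (simp add: Jgens_def Sgens_def)
  have J1: "Jgens ! 1 = (\<lambda>v. v$2 * v$4 - v$1 * (v$3)^2)" by (simp add: Jgens_def Sgens_def)
  have J2: "Jgens ! 2 = (\<lambda>v. v$3 * v$4 - v$1 * (v$2)^3)" by (simp add: Jgens_def Sgens_def)
  have J4: "Jgens ! 4 = (\<lambda>v. (v$1)^2 * (v$2)^2 * v$3 - (v$4)^2)" by (simp add: Jgens_def Sgens_def)
  have g: "cpoly4 p \<Longrightarrow> k < 6 \<Longrightarrow> (\<lambda>v. p v * (Jgens ! k) v) \<in> ideal_gen Jgens" for p k
    by (rule ideal_gen_mult_gen) (simp_all add: Jgens_len)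
  consider "i = 1" | "i = 2" | "i = 3" | "i = 4" using exhaust_4 by blast
  then show ?thesis
  proof cases
    case 1
    show ?thesis by (rule ideal_gen_cong[OF g[OF cpoly4.coord[of 4], of 5]]) (simp_all add: 1 J5)
  next
    case 2
    have "(\<lambda>v. 1 * (Jgens ! 1) v + (v$3)^2 * (Jgens ! 5) v) \<in> ideal_gen Jgens"
      by (intro ideal_gen_add g cpoly4.const cpoly4_x) simp_all
    then show ?thesis by (rule ideal_gen_cong) (simp add: 2 Jgens_def Sgens_def)
  next
    case 3
    have "(\<lambda>v. 1 * (Jgens ! 2) v + (v$2)^3 * (Jgens ! 5) v) \<in> ideal_gen Jgens"
      by (intro ideal_gen_add g cpoly4.const cpoly4_x) simp_all
    then show ?thesis by (rule ideal_gen_cong) (simp add: 3 Jgens_def Sgens_def)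
  next
    case 4
    have cp: "cpoly4 (\<lambda>v. (v$1)^1 * (v$2)^2 * (v$3)^1)" by (intro cpoly4.mult cpoly4_x)
    have "(\<lambda>v. (-1) * (Jgens ! 4) v + ((v$1)^1 * (v$2)^2 * (v$3)^1) * (Jgens ! 5) v) \<in> ideal_gen Jgens"
      by (intro ideal_gen_add g cpoly4.const cp) simp_all
    then show ?thesis by (rule ideal_gen_cong) (simp add: 4 Jgens_def Sgens_def power2_eq_square)
  qed
qed

lemma nonCM: "\<exists>g. cpoly4 g \<and> \<not> loc_mem0 Jgens g \<and> (\<forall>i. loc_mem0 Jgens (\<lambda>v. v$i * g v))"
proof (intro exI conjI allI)
  show "cpoly4 (\<lambda>v. v$4)" by (rule cpoly4.coord)
  show "\<not> loc_mem0 Jgens (\<lambda>v. v$4)" by (rule not_loc_w)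
  fix i :: 4
  show "loc_mem0 Jgens (\<lambda>v. v$i * v$4)"
    unfolding loc_mem0_def
    by (rule exI[of _ "\<lambda>v. 1"]) (simp add: cpoly4.const J_mem)
qed

theorem mainTheorem9:
  shows "sing_locus surfS = singline
     \<and> whitney_regular_at0 surfS singline singline
     \<and> {f. cpoly4 f \<and> (\<forall>v\<in>surfS. f v = 0)} = ideal_gen Sgens
     \<and> surfS = {v. \<forall>g\<in>set Sgens. g v = 0}
     \<and> (\<exists>g. cpoly4 g \<and> \<not> loc_mem0 Jgens g \<and> (\<forall>i. loc_mem0 Jgens (\<lambda>v. v$i * g v)))
     \<and> (0::complex^4) islimpt (surfS \<inter> {v. v$1 = 0})"
  proof (intro conjI)
  show "sing_locus surfS = singline" by (rule sing_locus_eq)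
  show "whitney_regular_at0 surfS singline singline" by (rule whitney)
  show "{f. cpoly4 f \<and> (\<forall>v\<in>surfS. f v = 0)} = ideal_gen Sgens" by (rule ideal_part)
  show "surfS = {v. \<forall>g\<in>set Sgens. g v = 0}" by (rule surfS_zero_set)
  show "\<exists>g. cpoly4 g \<and> \<not> loc_mem0 Jgens g \<and> (\<forall>i. loc_mem0 Jgens (\<lambda>v. v$i * g v))" by (rule nonCM)
  show "(0::complex^4) islimpt (surfS \<inter> {v. v$1 = 0})" by (rule S_islimpt)
qed

end
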